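(* Every pseudo-mitotic group $\Gamma$ is boundedly acyclic, i.e. $\operatorname{H}^n_b(\Gamma;\mathbb{R}) \cong 0$ for all $n \geq 1$.
   Context: For a group $\Gamma$, the bounded cohomology $\operatorname{H}^*_b(\Gamma;\mathbb{R})$ is the cohomology of the complex $\operatorname{C}^n_b(\Gamma;\mathbb{R}) = \ell^\infty(\Gamma^{n+1})^\Gamma$ of bounded real functions on $\Gamma^{n+1}$ invariant under the diagonal action, with the homogeneous coboundary. A subgroup $H \leq \Gamma$ has a pseudo-mitosis in $\Gamma$ if there are homomorphisms $\psi_0,\psi_1\colon H \to \Gamma$ and an element $g \in \Gamma$ such that (1) $h\psi_1(h) = \psi_0(h)$ for all $h \in H$; (2) $[h,\psi_1(h')] = 1$ for all $h,h' \in H$; (3) $\psi_1(h) = g^{-1}\psi_0(h) g$ for all $h \in H$. A group is pseudo-mitotic (also called binate) if every finitely generated subgroup of it has a pseudo-mitosis in it. *)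

theory Defs
  imports "HOL-Algebra.Algebra"
begin

definition commutator :: "('a, 'b) monoid_scheme \<Rightarrow> 'a \<Rightarrow> 'a \<Rightarrow> 'a" where
  "commutator G x y = inv\<^bsub>G\<^esub> x \<otimes>\<^bsub>G\<^esub> inv\<^bsub>G\<^esub> y \<otimes>\<^bsub>G\<^esub> x \<otimes>\<^bsub>G\<^esub> y"

definition has_pseudo_mitosis :: "('a, 'b) monoid_scheme \<Rightarrow> 'a set \<Rightarrow> bool" where
  "has_pseudo_mitosis G H \<longleftrightarrow>
     (\<exists>\<psi>0 \<psi>1 g.
        \<psi>0 \<in> hom (G\<lparr>carrier := H\<rparr>) G \<and> \<psi>1 \<in> hom (G\<lparr>carrier := H\<rparr>) G \<and> g \<in> carrier G \<and>
        (\<forall>h\<in>H. h \<otimes>\<^bsub>G\<^esub> \<psi>1 h = \<psi>0 h) \<and>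
        (\<forall>h\<in>H. \<forall>h'\<in>H. commutator G h (\<psi>1 h') = \<one>\<^bsub>G\<^esub>) \<and>
        (\<forall>h\<in>H. \<psi>1 h = inv\<^bsub>G\<^esub> g \<otimes>\<^bsub>G\<^esub> \<psi>0 h \<otimes>\<^bsub>G\<^esub> g))"

text \<open>Finitely generated subgroups are exactly the subgroups generated by finite subsets.\<close>
definition pseudo_mitotic :: "('a, 'b) monoid_scheme \<Rightarrow> bool" where
  "pseudo_mitotic G \<longleftrightarrow>
     (\<forall>S. finite S \<and> S \<subseteq> carrier G \<longrightarrow> has_pseudo_mitosis G (generate G S))"

text \<open>An n-cochain is a real function on (n+1)-tuples (lists of length n+1) of group elements;
  only its values on such tuples matter.\<close>

definition tuples :: "('a, 'b) monoid_scheme \<Rightarrow> nat \<Rightarrow> 'a list set" where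
  "tuples G k = {xs. length xs = k \<and> set xs \<subseteq> carrier G}"

definition bounded_cochain :: "('a, 'b) monoid_scheme \<Rightarrow> nat \<Rightarrow> ('a list \<Rightarrow> real) \<Rightarrow> bool" where
  "bounded_cochain G n f \<longleftrightarrow> (\<exists>C. \<forall>xs\<in>tuples G (Suc n). \<bar>f xs\<bar> \<le> C)"

definition invariant_cochain :: "('a, 'b) monoid_scheme \<Rightarrow> nat \<Rightarrow> ('a list \<Rightarrow> real) \<Rightarrow> bool" where
  "invariant_cochain G n f \<longleftrightarrow>
     (\<forall>g\<in>carrier G. \<forall>xs\<in>tuples G (Suc n). f (map (\<lambda>x. g \<otimes>\<^bsub>G\<^esub> x) xs) = f xs)"

definition Cb :: "('a, 'b) monoid_scheme \<Rightarrow> nat \<Rightarrow> ('a list \<Rightarrow> real) set" where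
  "Cb G n = {f. bounded_cochain G n f \<and> invariant_cochain G n f}"

definition delete_at :: "nat \<Rightarrow> 'a list \<Rightarrow> 'a list" where
  "delete_at i xs = take i xs @ drop (Suc i) xs"

definition coboundary :: "('a list \<Rightarrow> real) \<Rightarrow> 'a list \<Rightarrow> real" where
  "coboundary f xs = (\<Sum>i<length xs. (-1) ^ i * f (delete_at i xs))"

definition bounded_cohomology_vanishes :: "('a, 'b) monoid_scheme \<Rightarrow> nat \<Rightarrow> bool" where
  "bounded_cohomology_vanishes G n \<longleftrightarrow>
     (\<forall>f\<in>Cb G n. (\<forall>xs\<in>tuples G (Suc (Suc n)). coboundary f xs = 0) \<longrightarrow>
        (\<exists>h\<in>Cb G (n - 1). \<forall>xs\<in>tuples G (Suc n). f xs = coboundary h xs))"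

definition boundedly_acyclic :: "('a, 'b) monoid_scheme \<Rightarrow> bool" where
  "boundedly_acyclic G \<longleftrightarrow> (\<forall>n\<ge>1. bounded_cohomology_vanishes G n)"

end

theory Submission
  imports Defs "HOL-Analysis.Analysis"
begin

lemma length_delete_at [simp]: "i < length xs \<Longrightarrow> length (delete_at i xs) = length xs - 1"
  by (simp add: delete_at_def)

lemma length_delete_at': "length (delete_at i xs) = (if i < length xs then length xs - 1 else length xs)"
  by (simp add: delete_at_def)

lemma nth_delete_at: "i < length xs \<Longrightarrow> k < length xs - 1 \<Longrightarrow>
   delete_at i xs ! k = (if k < i then xs ! k else xs ! Suc k)"
  by (auto simp: delete_at_def nth_append min_def)

lemma set_delete_at: "set (delete_at i xs) \<subseteq> set xs"
  unfolding delete_at_def by (auto dest: in_set_takeD in_set_dropD)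

lemma map_delete_at: "map f (delete_at i xs) = delete_at i (map f xs)"
  by (simp add: delete_at_def take_map drop_map)

lemma delete_at_Cons0 [simp]: "delete_at 0 (v # xs) = xs"
  by (simp add: delete_at_def)

lemma delete_at_Cons_Suc [simp]: "delete_at (Suc i) (v # xs) = v # delete_at i xs"
  by (simp add: delete_at_def)

lemma delete_at_delete_at:
  assumes "i \<le> j" "Suc j < length xs"
  shows "delete_at j (delete_at i xs) = delete_at i (delete_at (Suc j) xs)"
proof (rule nth_equalityI)
  show "length (delete_at j (delete_at i xs)) = length (delete_at i (delete_at (Suc j) xs))"
    using assms by simp
  fix k assume k: "k < length (delete_at j (delete_at i xs))"
  then have k': "k < length xs - 2" using assms by simp
  show "delete_at j (delete_at i xs) ! k = delete_at i (delete_at (Suc j) xs) ! k"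
    using assms k' by (simp add: nth_delete_at)
qed

lemma coboundary_Cons:
  "coboundary f (v # xs) = f xs - coboundary (\<lambda>ys. f (v # ys)) xs"
proof -
  have "coboundary f (v # xs) = (\<Sum>i<Suc (length xs). (-1) ^ i * f (delete_at i (v # xs)))"
    by (simp add: coboundary_def)
  also have "\<dots> = f xs + (\<Sum>i<length xs. (-1) ^ Suc i * f (delete_at (Suc i) (v # xs)))"
    by (subst sum.lessThan_Suc_shift) simp
  also have "\<dots> = f xs - coboundary (\<lambda>ys. f (v # ys)) xs"
    by (simp add: coboundary_def sum_negf)
  finally show ?thesis .
qed

lemma coboundary_cong:
  assumes "\<And>i. i < length xs \<Longrightarrow> f (delete_at i xs) = g (delete_at i xs)"
  shows "coboundary f xs = coboundary g xs"
  unfolding coboundary_def using assms by (intro sum.cong) auto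

lemma coboundary_diff: "coboundary (\<lambda>x. f x - g x) xs = coboundary f xs - coboundary g xs"
  by (simp add: coboundary_def sum_subtractf algebra_simps)

lemma coboundary_add: "coboundary (\<lambda>x. f x + g x) xs = coboundary f xs + coboundary g xs"
  by (simp add: coboundary_def sum.distrib algebra_simps)

lemma coboundary_scale: "coboundary (\<lambda>x. c * f x) xs = c * coboundary f xs"
  by (simp add: coboundary_def sum_distrib_left algebra_simps)

lemma coboundary_zero: "coboundary (\<lambda>x. 0) xs = 0"
  by (simp add: coboundary_def)

lemma coboundary_coboundary: "coboundary (coboundary f) xs = 0"
proof -
  define m where "m = length xs"
  define a where "a i j = (-1) ^ (i + j) * f (delete_at j (delete_at i xs))" for i j
  have "coboundary (coboundary f) xs = (\<Sum>i<m. \<Sum>j<m - 1. a i j)"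
    unfolding coboundary_def a_def m_def
    by (intro sum.cong refl) (simp add: sum_distrib_left power_add mult.assoc)
  also have "\<dots> = (\<Sum>p\<in>{..<m} \<times> {..<m-1}. a (fst p) (snd p))"
    by (simp add: sum.cartesian_product case_prod_beta)
  also have "{..<m} \<times> {..<m-1} = {p. fst p \<le> snd p \<and> snd p < m - 1} \<union> {p. snd p < fst p \<and> fst p < m}"
    by auto
  also have "(\<Sum>p\<in>{p. fst p \<le> snd p \<and> snd p < m - 1} \<union> {p. snd p < fst p \<and> fst p < m}. a (fst p) (snd p))
      = (\<Sum>p\<in>{p. fst p \<le> snd p \<and> snd p < m - 1}. a (fst p) (snd p)) + (\<Sum>p\<in>{p. snd p < fst p \<and> fst p < m}. a (fst p) (snd p))"
  proof (rule sum.union_disjoint)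
    show "finite {p. fst p \<le> snd p \<and> snd p < m - 1}"
      by (rule finite_subset[of _ "{..<m} \<times> {..<m}"]) auto
    show "finite {p. snd p < fst p \<and> fst p < m}"
      by (rule finite_subset[of _ "{..<m} \<times> {..<m}"]) auto
  qed auto
  also have "(\<Sum>p\<in>{p. snd p < fst p \<and> fst p < m}. a (fst p) (snd p))
       = (\<Sum>p\<in>{p. fst p \<le> snd p \<and> snd p < m - 1}. - a (fst p) (snd p))"
  proof -
    have key: "a (Suc j) i = - a i j" if "i \<le> j" "j < m - 1" for i j
    proof -
      have "delete_at j (delete_at i xs) = delete_at i (delete_at (Suc j) xs)"
        using that by (intro delete_at_delete_at) (auto simp: m_def)
      then show ?thesis by (simp add: a_def add.commute)
    qed
    have key': "a i j = - a j (i - 1)" if "j < i" "i < m" for i j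
      using key[of j "i - 1"] that by simp
    show ?thesis
      by (rule sum.reindex_bij_witness[of _ "\<lambda>p. (Suc (snd p), fst p)" "\<lambda>p. (snd p, fst p - 1)"])
         (auto simp: key')
  qed
  finally show ?thesis by (simp add: sum_negf)
qed

definition d1 :: "('a list \<Rightarrow> 'a list \<Rightarrow> real) \<Rightarrow> 'a list \<Rightarrow> 'a list \<Rightarrow> real" where
  "d1 B a b = coboundary (\<lambda>x. B x b) a"

definition d2 :: "('a list \<Rightarrow> 'a list \<Rightarrow> real) \<Rightarrow> 'a list \<Rightarrow> 'a list \<Rightarrow> real" where
  "d2 B a b = coboundary (B a) b"

definition DD :: "('a list \<Rightarrow> 'a list \<Rightarrow> real) \<Rightarrow> 'a list \<Rightarrow> 'a list \<Rightarrow> real" where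
  "DD B a b = d1 B a b + (-1) ^ Suc (length a) * d2 B a b"

lemma d1d2_swap: "d1 (d2 B) a b = d2 (d1 B) a b"
  unfolding d1_def d2_def coboundary_def
  by (simp add: sum_distrib_left sum.swap[of _ "{..<length a}"] mult.left_commute)

lemma d1d1: "d1 (d1 B) a b = 0"
  unfolding d1_def using coboundary_coboundary[of "\<lambda>x. B x b" a] by simp

lemma d2d2: "d2 (d2 B) a b = 0"
  unfolding d2_def using coboundary_coboundary[of "B a" b] by simp

lemma DD_DD: "DD (DD B) a b = 0"
proof -
  have 1: "d1 (DD B) a b = d1 (d1 B) a b + (-1) ^ length a * d1 (d2 B) a b"
  proof -
    have "d1 (DD B) a b = coboundary (\<lambda>x. d1 B x b + (-1) ^ length a * d2 B x b) a"
      unfolding d1_def[of "DD B"] DD_def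
      apply (rule coboundary_cong)
      subgoal for i by (cases "length a") (auto simp: length_delete_at')
      done
    also have "\<dots> = d1 (d1 B) a b + (-1) ^ length a * d1 (d2 B) a b"
      by (simp add: coboundary_add coboundary_scale d1_def)
    finally show ?thesis .
  qed
  have 2: "d2 (DD B) a b = d2 (d1 B) a b + (-1) ^ Suc (length a) * d2 (d2 B) a b"
  proof -
    have "d2 (DD B) a b = coboundary (\<lambda>y. d1 B a y + (-1) ^ Suc (length a) * d2 B a y) b"
      unfolding d2_def[of "DD B"] DD_def ..
    also have "\<dots> = d2 (d1 B) a b + (-1) ^ Suc (length a) * d2 (d2 B) a b"
      by (simp only: coboundary_add coboundary_scale) (simp add: d2_def[abs_def])
    finally show ?thesis .
  qed
  show ?thesis
    unfolding DD_def[of "DD B"] using 1 2 by (simp add: d1d1 d2d2 d1d2_swap)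
qed


lemma take_delete_at1:
  assumes "i \<le> p" "p < length s"
  shows "delete_at i (take (Suc p) s) = take p (delete_at i s)"
  using assms by (simp add: delete_at_def take_append min_def take_drop)

lemma drop_delete_at1:
  assumes "i < p" "p \<le> length s"
  shows "drop (p - Suc 0) (delete_at i s) = drop p s"
  using assms by (simp add: delete_at_def drop_append min_def)

lemma drop_delete_at2:
  assumes "p \<le> length s"
  shows "delete_at j (drop p s) = drop p (delete_at (p + j) s)"
  using assms by (simp add: delete_at_def drop_append drop_take min_def add.commute)

lemma take_delete_at2:
  assumes "p < k"
  shows "take (Suc p) (delete_at k s) = take (Suc p) s"
  using assms by (simp add: delete_at_def take_append min_def)

definition AW :: "('a list \<Rightarrow> 'a list \<Rightarrow> real) \<Rightarrow> 'a list \<Rightarrow> real" where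
  "AW B s = (\<Sum>p<length s. B (take (Suc p) s) (drop p s))"

lemma AW_DD:
  assumes B0: "\<And>b. B [] b = 0" and B0': "\<And>a. B a [] = 0"
  shows "AW (DD B) s = coboundary (AW B) s"
proof -
  define m where "m = length s"
  define c where "c k q = (-1) ^ k * B (take (Suc q) (delete_at k s)) (drop q (delete_at k s))" for k q
  define e where "e p = (-1) ^ p * B (take p s) (drop p s)" for p
  have d1eq: "d1 B (take (Suc p) s) (drop p s) = (\<Sum>i<p. c i (p - 1)) + (-1) ^ p * B (take p s) (drop p s)"
    if p: "p < m" for p
  proof -
    have "d1 B (take (Suc p) s) (drop p s) = (\<Sum>i<Suc p. (-1) ^ i * B (delete_at i (take (Suc p) s)) (drop p s))"
      using p by (simp add: d1_def coboundary_def m_def)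
    also have "\<dots> = (\<Sum>i<Suc p. (-1) ^ i * B (take p (delete_at i s)) (drop p s))"
      using p by (intro sum.cong refl) (simp add: take_delete_at1 m_def)
    also have "\<dots> = (\<Sum>i<p. (-1) ^ i * B (take p (delete_at i s)) (drop p s)) + (-1) ^ p * B (take p s) (drop p s)"
    proof -
      have "take p (delete_at p s) = take p s" using p by (simp add: delete_at_def m_def)
      then show ?thesis by simp
    qed
    also have "(\<Sum>i<p. (-1) ^ i * B (take p (delete_at i s)) (drop p s)) = (\<Sum>i<p. c i (p - 1))"
      using p by (intro sum.cong refl) (auto simp: c_def drop_delete_at1 m_def)
    finally show ?thesis .
  qed
  have d2eq: "(-1) ^ p * d2 B (take (Suc p) s) (drop p s) = (-1) ^ p * B (take (Suc p) s) (drop (Suc p) s) + (\<Sum>k\<in>{Suc p..<m}. c k p)"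
    if p: "p < m" for p
  proof -
    define N where "N = m - Suc p"
    have mN: "m - p = Suc N" using p by (simp add: N_def)
    have "d2 B (take (Suc p) s) (drop p s) = (\<Sum>j<Suc N. (-1) ^ j * B (take (Suc p) s) (delete_at j (drop p s)))"
      using p mN by (simp add: d2_def coboundary_def m_def)
    also have "\<dots> = B (take (Suc p) s) (drop (Suc p) s) + (\<Sum>j<N. (-1) ^ Suc j * B (take (Suc p) s) (delete_at (Suc j) (drop p s)))"
      by (subst sum.lessThan_Suc_shift) (simp add: delete_at_def drop_Suc tl_drop)
    also have "(\<Sum>j<N. (-1) ^ Suc j * B (take (Suc p) s) (delete_at (Suc j) (drop p s))) = (\<Sum>j<N. (-1) ^ p * c (j + Suc p) p)"
      using p by (intro sum.cong refl) (simp add: c_def drop_delete_at2 take_delete_at2 m_def power_add add.commute)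
    also have "\<dots> = (-1) ^ p * (\<Sum>j\<in>{0..<N}. c (j + Suc p) p)"
      by (simp add: sum_distrib_left atLeast0LessThan)
    also have "(\<Sum>j\<in>{0..<N}. c (j + Suc p) p) = (\<Sum>k\<in>{0 + Suc p..<N + Suc p}. c k p)"
      by (rule sum.shift_bounds_nat_ivl[symmetric])
    also have "{0 + Suc p..<N + Suc p} = {Suc p..<m}" using p by (auto simp: N_def)
    finally show ?thesis by (simp add: algebra_simps)
  qed
  have "AW (DD B) s = (\<Sum>p<m. d1 B (take (Suc p) s) (drop p s) + (-1) ^ p * d2 B (take (Suc p) s) (drop p s))"
    unfolding AW_def DD_def m_def by (intro sum.cong refl) simp
  also have "\<dots> = (\<Sum>p<m. (\<Sum>i<p. c i (p - 1))) + (\<Sum>p<m. e p - e (Suc p)) + (\<Sum>p<m. \<Sum>k\<in>{Suc p..<m}. c k p)"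
    by (simp add: d1eq d2eq e_def sum.distrib[symmetric] algebra_simps)
  also have "(\<Sum>p<m. e p - e (Suc p)) = 0"
  proof -
    have "(\<Sum>p<m. e p - e (Suc p)) = e 0 - e m" by (simp add: sum_lessThan_telescope')
    also have "\<dots> = 0" by (simp add: e_def B0 B0' m_def)
    finally show ?thesis .
  qed
  also have "(\<Sum>p<m. (\<Sum>i<p. c i (p - 1))) = (\<Sum>q<m - 1. \<Sum>k<Suc q. c k q)"
  proof (cases m)
    case 0 then show ?thesis by simp
  next
    case (Suc m') then show ?thesis by (simp only: sum.lessThan_Suc_shift[of _ m'] diff_Suc_1) simp
  qed
  also have "(\<Sum>p<m. \<Sum>k\<in>{Suc p..<m}. c k p) = (\<Sum>q<m - 1. \<Sum>k\<in>{Suc q..<m}. c k q)"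
  proof (cases m)
    case 0 then show ?thesis by simp
  next
    case (Suc m') then show ?thesis by (simp add: sum.lessThan_Suc)
  qed
  also have "(\<Sum>q<m - 1. \<Sum>k<Suc q. c k q) + 0 + (\<Sum>q<m - 1. \<Sum>k\<in>{Suc q..<m}. c k q) = (\<Sum>q<m - 1. \<Sum>k<m. c k q)"
  proof -
    have "(\<Sum>k<Suc q. c k q) + (\<Sum>k\<in>{Suc q..<m}. c k q) = (\<Sum>k<m. c k q)" if "q < m - 1" for q
    proof -
      have e: "{..<m} = {..<Suc q} \<union> {Suc q..<m}" using that by auto
      have "(\<Sum>k\<in>{..<Suc q} \<union> {Suc q..<m}. c k q) = (\<Sum>k<Suc q. c k q) + (\<Sum>k\<in>{Suc q..<m}. c k q)"
        by (rule sum.union_disjoint) auto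
      then show ?thesis by (simp only: e)
    qed
    then show ?thesis by (simp add: sum.distrib[symmetric])
  qed
  also have "\<dots> = (\<Sum>k<m. \<Sum>q<m - 1. c k q)" by (rule sum.swap)
  also have "\<dots> = coboundary (AW B) s"
    unfolding coboundary_def AW_def m_def c_def
    by (intro sum.cong refl) (simp add: sum_distrib_left)
  finally show ?thesis .
qed


lemma DD_cong:
  assumes "\<And>i. i < length a \<Longrightarrow> B (delete_at i a) b = B' (delete_at i a) b"
      and "\<And>j. j < length b \<Longrightarrow> B a (delete_at j b) = B' a (delete_at j b)"
  shows "DD B a b = DD B' a b"
  unfolding DD_def d1_def d2_def
  by (subst coboundary_cong[where g="\<lambda>x. B' x b"]) (use assms in \<open>auto intro: coboundary_cong\<close>)

lemma DD_diff: "DD (\<lambda>x y. B x y - B' x y) a b = DD B a b - DD B' a b"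
  unfolding DD_def d1_def d2_def by (simp add: coboundary_diff algebra_simps)

lemma DD_add: "DD (\<lambda>x y. B x y + B' x y) a b = DD B a b + DD B' a b"
  unfolding DD_def d1_def d2_def by (simp add: coboundary_add algebra_simps)

lemma DD_scale: "DD (\<lambda>x y. c * B x y) a b = c * DD B a b"
  unfolding DD_def d1_def d2_def by (simp add: coboundary_scale algebra_simps)

function Xc :: "('a \<Rightarrow> 'a \<Rightarrow> 'a) \<Rightarrow> ('a \<Rightarrow> 'a) \<Rightarrow> ('a list \<Rightarrow> real) \<Rightarrow> 'a list \<Rightarrow> 'a list \<Rightarrow> real" where
  "Xc mul ps F a b = (if a = [] \<or> b = [] then 0
     else if length a = 1 then F (map (\<lambda>y. mul (hd a) (ps y)) b)
     else if length b = 1 then F (map (\<lambda>x. mul x (ps (hd b))) a)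
     else (\<Sum>i<length a. (-1) ^ i * Xc mul ps (\<lambda>xs. F (mul (hd a) (ps (hd b)) # xs)) (delete_at i a) b)
        + (-1) ^ Suc (length a) * (\<Sum>j<length b. (-1) ^ j * Xc mul ps (\<lambda>xs. F (mul (hd a) (ps (hd b)) # xs)) a (delete_at j b)))"
  by pat_completeness auto
termination
  by (relation "Wellfounded.measure (\<lambda>(mul, ps, F, a, b). length a + length b)") (auto simp: length_delete_at')

declare Xc.simps [simp del]

lemma Xc_Nil1 [simp]: "Xc mul ps F [] b = 0" and Xc_Nil2 [simp]: "Xc mul ps F a [] = 0"
  by (simp_all add: Xc.simps)

lemma Xc_a1: "b \<noteq> [] \<Longrightarrow> Xc mul ps F [x] b = F (map (\<lambda>y. mul x (ps y)) b)"
  by (simp add: Xc.simps)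

lemma Xc_b1: "a \<noteq> [] \<Longrightarrow> Xc mul ps F a [y] = F (map (\<lambda>x. mul x (ps y)) a)"
  by (cases a) (auto simp: Xc.simps)

lemma Xc_rec:
  assumes "2 \<le> length a" "2 \<le> length b"
  shows "Xc mul ps F a b = DD (Xc mul ps (\<lambda>xs. F (mul (hd a) (ps (hd b)) # xs))) a b"
  using assms by (subst Xc.simps) (auto simp: DD_def d1_def d2_def coboundary_def)

lemma Xc_diff: "Xc mul ps (\<lambda>xs. F xs - G xs) a b = Xc mul ps F a b - Xc mul ps G a b"
proof (induction mul ps F a b arbitrary: G rule: Xc.induct)
  case (1 mul ps F a b)
  show ?case
  proof (cases "a = [] \<or> b = []")
    case True
    then show ?thesis by auto
  next
    case ne: False
    show ?thesis
    proof (cases "length a = 1")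
      case True
      then obtain x where "a = [x]" by (cases a) (auto simp: length_Suc_conv)
      then show ?thesis using ne by (simp add: Xc_a1)
    next
      case na: False
      show ?thesis
      proof (cases "length b = 1")
        case True
        then obtain y where "b = [y]" by (cases b) (auto simp: length_Suc_conv)
        then show ?thesis using ne by (simp add: Xc_b1)
      next
        case nb: False
        have "length a \<noteq> 0" "length b \<noteq> 0" using ne by auto
        then have la: "2 \<le> length a" and lb: "2 \<le> length b" using na nb by linarith+
        define v where "v = mul (hd a) (ps (hd b))"
        have "Xc mul ps (\<lambda>xs. F xs - G xs) a b = DD (Xc mul ps (\<lambda>xs. F (v # xs) - G (v # xs))) a b"
          by (simp add: Xc_rec[OF la lb] v_def)
        also have "\<dots> = DD (\<lambda>x y. Xc mul ps (\<lambda>xs. F (v # xs)) x y - Xc mul ps (\<lambda>xs. G (v # xs)) x y) a b"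
        proof (rule DD_cong)
          fix i assume "i < length a"
          then show "Xc mul ps (\<lambda>xs. F (v # xs) - G (v # xs)) (delete_at i a) b =
              Xc mul ps (\<lambda>xs. F (v # xs)) (delete_at i a) b - Xc mul ps (\<lambda>xs. G (v # xs)) (delete_at i a) b"
            using "1.IH"(1)[of i "\<lambda>xs. G (v # xs)"] ne na nb by (simp add: v_def)
        next
          fix j assume "j < length b"
          then show "Xc mul ps (\<lambda>xs. F (v # xs) - G (v # xs)) a (delete_at j b) =
              Xc mul ps (\<lambda>xs. F (v # xs)) a (delete_at j b) - Xc mul ps (\<lambda>xs. G (v # xs)) a (delete_at j b)"
            using "1.IH"(2)[of j "\<lambda>xs. G (v # xs)"] ne na nb by (simp add: v_def)
        qed
        also have "\<dots> = Xc mul ps F a b - Xc mul ps G a b"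
          by (simp add: DD_diff Xc_rec[OF la lb] v_def)
        finally show ?thesis .
      qed
    qed
  qed
qed

lemma Xc_zero_fun: "Xc mul ps (\<lambda>xs. 0) a b = 0"
  using Xc_diff[of mul ps "\<lambda>_. 0" "\<lambda>_. 0" a b] by simp

lemma Xc_cong_fun: "(\<And>xs. F xs = G xs) \<Longrightarrow> Xc mul ps F a b = Xc mul ps G a b"
  by (metis ext)

lemma delete_at_ne: "2 \<le> length xs \<Longrightarrow> i < length xs \<Longrightarrow> delete_at i xs \<noteq> []"
  by (metis One_nat_def Suc_1 Suc_le_lessD diff_is_0_eq length_delete_at length_greater_0_conv less_numeral_extra(3) not_le zero_less_diff)

lemma coboundary_single: "coboundary f [x] = f []"
  by (simp add: coboundary_def delete_at_def)

lemma Xc_chain: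
  assumes "as \<noteq> []" "bs \<noteq> []" "3 \<le> length as + length bs"
  shows "Xc mul ps (coboundary F) as bs = DD (Xc mul ps F) as bs"
  using assms
proof (induction "length as + length bs" arbitrary: F as bs rule: less_induct)
  case less
  show ?case
  proof (cases "length as = 1")
    case True
    then obtain x where a: "as = [x]" by (cases as) (auto simp: length_Suc_conv)
    then have lb: "2 \<le> length bs" using less by simp
    have "Xc mul ps (coboundary F) as bs = (\<Sum>j<length bs. (-1) ^ j * F (map (\<lambda>y. mul x (ps y)) (delete_at j bs)))"
      using less a by (simp add: Xc_a1 coboundary_def map_delete_at)
    also have "\<dots> = (\<Sum>j<length bs. (-1) ^ j * Xc mul ps F as (delete_at j bs))"
      using a lb by (intro sum.cong refl) (simp add: Xc_a1 delete_at_ne)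
    also have "\<dots> = DD (Xc mul ps F) as bs"
      unfolding DD_def d1_def d2_def using a by (simp add: coboundary_single coboundary_def)
    finally show ?thesis .
  next
    case False
    moreover have "length as \<noteq> 0" using less.prems by simp
    ultimately have la: "2 \<le> length as" by linarith
    show ?thesis
    proof (cases "length bs = 1")
      case True
      then obtain y where b: "bs = [y]" by (cases bs) (auto simp: length_Suc_conv)
      have "Xc mul ps (coboundary F) as bs = (\<Sum>i<length as. (-1) ^ i * F (map (\<lambda>x. mul x (ps y)) (delete_at i as)))"
        using less b by (simp add: Xc_b1 coboundary_def map_delete_at)
      also have "\<dots> = (\<Sum>i<length as. (-1) ^ i * Xc mul ps F (delete_at i as) bs)"
        using b la by (intro sum.cong refl) (simp add: Xc_b1 delete_at_ne)
      also have "\<dots> = DD (Xc mul ps F) as bs"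
        unfolding DD_def d1_def d2_def using b by (simp add: coboundary_single coboundary_def)
      finally show ?thesis .
    next
      case False
      moreover have "length bs \<noteq> 0" using less.prems by simp
      ultimately have lb: "2 \<le> length bs" by linarith
      define v where "v = mul (hd as) (ps (hd bs))"
      have cone: "(\<lambda>xs. coboundary F (v # xs)) = (\<lambda>xs. F xs - coboundary (\<lambda>ys. F (v # ys)) xs)"
        by (rule ext) (rule coboundary_Cons)
      have "Xc mul ps (coboundary F) as bs = DD (Xc mul ps (\<lambda>xs. F xs - coboundary (\<lambda>ys. F (v # ys)) xs)) as bs"
        using Xc_rec[OF la lb, of mul ps "coboundary F"] cone by (simp add: v_def)
      also have "\<dots> = DD (\<lambda>x y. Xc mul ps F x y - DD (Xc mul ps (\<lambda>ys. F (v # ys))) x y) as bs"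
      proof (rule DD_cong)
        fix i assume i: "i < length as"
        have ne: "delete_at i as \<noteq> []" using la i by (rule delete_at_ne)
        have len: "length (delete_at i as) + length bs < length as + length bs"
                  "3 \<le> length (delete_at i as) + length bs" using i la lb by auto
        show "Xc mul ps (\<lambda>xs. F xs - coboundary (\<lambda>ys. F (v # ys)) xs) (delete_at i as) bs =
              Xc mul ps F (delete_at i as) bs - DD (Xc mul ps (\<lambda>ys. F (v # ys))) (delete_at i as) bs"
          using less(1)[OF len(1) ne less.prems(2) len(2), of "\<lambda>ys. F (v # ys)"]
          by (simp add: Xc_diff)
      next
        fix j assume j: "j < length bs"
        have ne: "delete_at j bs \<noteq> []" using lb j by (rule delete_at_ne)
        have len: "length as + length (delete_at j bs) < length as + length bs"
                  "3 \<le> length as + length (delete_at j bs)" using j la lb by auto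
        show "Xc mul ps (\<lambda>xs. F xs - coboundary (\<lambda>ys. F (v # ys)) xs) as (delete_at j bs) =
              Xc mul ps F as (delete_at j bs) - DD (Xc mul ps (\<lambda>ys. F (v # ys))) as (delete_at j bs)"
          using less(1)[OF len(1) less.prems(1) ne len(2), of "\<lambda>ys. F (v # ys)"]
          by (simp add: Xc_diff)
      qed
      also have "\<dots> = DD (Xc mul ps F) as bs"
        by (simp add: DD_diff DD_DD)
      finally show ?thesis .
    qed
  qed
qed


function Tc :: "('a \<Rightarrow> 'a) \<Rightarrow> (('a list \<Rightarrow> real) \<Rightarrow> 'a list \<Rightarrow> real) \<Rightarrow> ('a list \<Rightarrow> real) \<Rightarrow> 'a list \<Rightarrow> real" where
  "Tc ph Ps F s = (if s = [] then 0 else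
     F (ph (hd s) # map ph s) - Ps (\<lambda>xs. F (ph (hd s) # xs)) s
     - (\<Sum>i<length s. (-1) ^ i * Tc ph Ps (\<lambda>xs. F (ph (hd s) # xs)) (delete_at i s)))"
  by pat_completeness auto
termination
  by (relation "Wellfounded.measure (\<lambda>(ph, Ps, F, s). length s)") (auto simp: length_delete_at')

declare Tc.simps [simp del]

lemma Tc_Nil [simp]: "Tc ph Ps F [] = 0"
  by (simp add: Tc.simps)

lemma Tc_Cons: "s \<noteq> [] \<Longrightarrow> Tc ph Ps F s =
     F (ph (hd s) # map ph s) - Ps (\<lambda>xs. F (ph (hd s) # xs)) s
     - coboundary (Tc ph Ps (\<lambda>xs. F (ph (hd s) # xs))) s"
  by (subst Tc.simps) (simp add: coboundary_def)

lemma Tc_diff: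
  assumes PsLin: "\<And>F G s. Ps (\<lambda>xs. F xs - G xs) s = Ps F s - Ps G s"
  shows "Tc ph Ps (\<lambda>xs. F xs - G xs) s = Tc ph Ps F s - Tc ph Ps G s"
proof (induction "length s" arbitrary: F G s rule: less_induct)
  case less
  show ?case
  proof (cases "s = []")
    case True then show ?thesis by simp
  next
    case False
    define v where "v = ph (hd s)"
    have "coboundary (Tc ph Ps (\<lambda>xs. F (v # xs) - G (v # xs))) s
        = coboundary (\<lambda>t. Tc ph Ps (\<lambda>xs. F (v # xs)) t - Tc ph Ps (\<lambda>xs. G (v # xs)) t) s"
      by (rule coboundary_cong) (use less False in \<open>simp add: length_delete_at'\<close>)
    then show ?thesis
      using False by (simp add: Tc_Cons[OF False] v_def[symmetric] PsLin coboundary_diff)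
  qed
qed

lemma Tc_homotopy:
  assumes PsLin: "\<And>F G s. Ps (\<lambda>xs. F xs - G xs) s = Ps F s - Ps G s"
      and PsD: "\<And>F s. 2 \<le> length s \<Longrightarrow> Ps (coboundary F) s = coboundary (Ps F) s"
      and Ps0: "\<And>F x. Ps F [x] = F [ph' x]"
      and ne: "s \<noteq> []"
  shows "coboundary (Tc ph Ps F) s + Tc ph Ps (coboundary F) s = F (map ph s) - Ps F s"
  using ne
proof (induction "length s" arbitrary: F s rule: less_induct)
  case less
  define v where "v = ph (hd s)"
  have cone: "(\<lambda>xs. coboundary F (v # xs)) = (\<lambda>xs. F xs - coboundary (\<lambda>ys. F (v # ys)) xs)"
    by (rule ext) (rule coboundary_Cons)
  show ?case
  proof (cases "length s = 1")
    case True
    then obtain x where s: "s = [x]" by (cases s) (auto simp: length_Suc_conv)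
    have v: "v = ph x" by (simp add: v_def s)
    have "Tc ph Ps (coboundary F) s = coboundary F [v, ph x] - Ps (\<lambda>xs. coboundary F (v # xs)) [x]"
      using s by (simp add: Tc_Cons v_def coboundary_single)
    also have "\<dots> = F [ph x] - F [ph' x]"
      using v by (simp add: Ps0 coboundary_def delete_at_def)
    finally show ?thesis using s by (simp add: coboundary_single Ps0)
  next
    case False
    moreover have "length s \<noteq> 0" using less.prems by simp
    ultimately have ls: "2 \<le> length s" by linarith
    define Fv where "Fv = (\<lambda>ys. F (v # ys))"
    have IH: "Tc ph Ps (coboundary Fv) t = Fv (map ph t) - Ps Fv t - coboundary (Tc ph Ps Fv) t"
      if "t \<noteq> []" "length t < length s" for t
      using less(1)[OF that(2) that(1), of Fv] by simp
    have "Tc ph Ps (coboundary F) s = coboundary F (v # map ph s) - Ps (\<lambda>xs. coboundary F (v # xs)) s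
          - coboundary (Tc ph Ps (\<lambda>xs. coboundary F (v # xs))) s"
      using less.prems by (simp add: Tc_Cons v_def)
    also have "coboundary F (v # map ph s) = F (map ph s) - coboundary (\<lambda>t. Fv (map ph t)) s"
      unfolding coboundary_Cons[of F v] Fv_def by (simp add: coboundary_def map_delete_at)
    also have "Ps (\<lambda>xs. coboundary F (v # xs)) s = Ps F s - coboundary (Ps Fv) s"
      by (simp add: cone PsLin PsD[OF ls] Fv_def)
    also have "coboundary (Tc ph Ps (\<lambda>xs. coboundary F (v # xs))) s
       = coboundary (\<lambda>t. Tc ph Ps F t - (Fv (map ph t) - Ps Fv t - coboundary (Tc ph Ps Fv) t)) s"
    proof (rule coboundary_cong)
      fix i assume i: "i < length s"
      have ne: "delete_at i s \<noteq> []" using ls i by (rule delete_at_ne)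
      have "Tc ph Ps (\<lambda>xs. coboundary F (v # xs)) (delete_at i s)
          = Tc ph Ps F (delete_at i s) - Tc ph Ps (coboundary Fv) (delete_at i s)"
        by (simp add: cone Tc_diff[OF PsLin] Fv_def)
      also have "\<dots> = Tc ph Ps F (delete_at i s) - (Fv (map ph (delete_at i s)) - Ps Fv (delete_at i s) - coboundary (Tc ph Ps Fv) (delete_at i s))"
        using IH[OF ne] i by (simp add: length_delete_at')
      finally show "Tc ph Ps (\<lambda>xs. coboundary F (v # xs)) (delete_at i s) =
          Tc ph Ps F (delete_at i s) - (Fv (map ph (delete_at i s)) - Ps Fv (delete_at i s) - coboundary (Tc ph Ps Fv) (delete_at i s))" .
    qed
    also have "\<dots> = coboundary (Tc ph Ps F) s - (coboundary (\<lambda>t. Fv (map ph t)) s - coboundary (Ps Fv) s)"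
      by (simp add: coboundary_diff coboundary_coboundary)
    finally show ?thesis by simp
  qed
qed


lemma abs_coboundary_le:
  assumes "\<And>i. i < length xs \<Longrightarrow> \<bar>f (delete_at i xs)\<bar> \<le> M"
  shows "\<bar>coboundary f xs\<bar> \<le> real (length xs) * M"
proof -
  have "\<bar>coboundary f xs\<bar> \<le> (\<Sum>i<length xs. \<bar>(-1) ^ i * f (delete_at i xs)\<bar>)"
    unfolding coboundary_def by (rule sum_abs)
  also have "\<dots> \<le> (\<Sum>i<length xs. M)"
    by (intro sum_mono) (simp add: abs_mult assms)
  finally show ?thesis by simp
qed

lemma abs_DD_le:
  assumes "\<And>i. i < length a \<Longrightarrow> \<bar>B (delete_at i a) b\<bar> \<le> M"
      and "\<And>j. j < length b \<Longrightarrow> \<bar>B a (delete_at j b)\<bar> \<le> M"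
  shows "\<bar>DD B a b\<bar> \<le> real (length a + length b) * M"
proof -
  have 1: "\<bar>d1 B a b\<bar> \<le> real (length a) * M"
    unfolding d1_def by (rule abs_coboundary_le) (use assms in auto)
  have 2: "\<bar>d2 B a b\<bar> \<le> real (length b) * M"
    unfolding d2_def by (rule abs_coboundary_le) (use assms in auto)
  have "\<bar>DD B a b\<bar> \<le> \<bar>d1 B a b\<bar> + \<bar>(-1) ^ Suc (length a) * d2 B a b\<bar>"
    unfolding DD_def by (rule abs_triangle_ineq)
  also have "\<bar>(-1) ^ Suc (length a) * d2 B a b\<bar> = \<bar>d2 B a b\<bar>" by (simp add: abs_mult)
  finally have "\<bar>DD B a b\<bar> \<le> \<bar>d1 B a b\<bar> + \<bar>d2 B a b\<bar>" .
  then show ?thesis using 1 2 by (simp add: algebra_simps)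
qed

lemma DD_zero:
  assumes "\<And>i. i < length a \<Longrightarrow> B (delete_at i a) b = 0"
      and "\<And>j. j < length b \<Longrightarrow> B a (delete_at j b) = 0"
  shows "DD B a b = 0"
proof -
  have "DD B a b = DD (\<lambda>x y. 0) a b" by (rule DD_cong) (use assms in auto)
  also have "\<dots> = 0" by (simp add: DD_def d1_def d2_def coboundary_def)
  finally show ?thesis .
qed

lemma DD_map:
  "DD B (map f a) (map g b) = DD (\<lambda>x y. B (map f x) (map g y)) a b"
  unfolding DD_def d1_def d2_def coboundary_def by (simp add: map_delete_at)

lemma AW_map:
  "AW B (map f s) = AW (\<lambda>x y. B (map f x) (map f y)) s"
  unfolding AW_def by (simp add: take_map drop_map)

lemma AW_diff: "AW (\<lambda>x y. B x y - B' x y) s = AW B s - AW B' s"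
  unfolding AW_def by (simp add: sum_subtractf)

lemma AW_cong:
  assumes "\<And>p. p < length s \<Longrightarrow> B (take (Suc p) s) (drop p s) = B' (take (Suc p) s) (drop p s)"
  shows "AW B s = AW B' s"
  unfolding AW_def using assms by (intro sum.cong) auto

lemma abs_AW_le:
  assumes "\<And>p. p < length s \<Longrightarrow> \<bar>B (take (Suc p) s) (drop p s)\<bar> \<le> M"
  shows "\<bar>AW B s\<bar> \<le> real (length s) * M"
proof -
  have "\<bar>AW B s\<bar> \<le> (\<Sum>p<length s. \<bar>B (take (Suc p) s) (drop p s)\<bar>)"
    unfolding AW_def by (rule sum_abs)
  also have "\<dots> \<le> (\<Sum>p<length s. M)" by (intro sum_mono) (simp add: assms)
  finally show ?thesis by simp
qed

lemma lists_delete_at: "xs \<in> lists A \<Longrightarrow> delete_at i xs \<in> lists A"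
  using set_delete_at[of i xs] by (auto simp: lists_eq_set)

lemma lists_take: "xs \<in> lists A \<Longrightarrow> take k xs \<in> lists A"
  by (auto simp: lists_eq_set dest: in_set_takeD)

lemma lists_drop: "xs \<in> lists A \<Longrightarrow> drop k xs \<in> lists A"
  by (auto simp: lists_eq_set dest: in_set_dropD)

locale xsetting =
  fixes G :: "('a, 'c) monoid_scheme" and ps :: "'a \<Rightarrow> 'a" and L K' :: "'a set"
  assumes grp: "group G"
    and L_sub: "L \<subseteq> carrier G"
    and ps_car: "\<And>x. x \<in> L \<Longrightarrow> ps x \<in> carrier G"
    and ps_hom: "\<And>x y. x \<in> L \<Longrightarrow> y \<in> L \<Longrightarrow> ps (x \<otimes>\<^bsub>G\<^esub> y) = ps x \<otimes>\<^bsub>G\<^esub> ps y"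
    and comm: "\<And>x y. x \<in> L \<Longrightarrow> y \<in> L \<Longrightarrow> x \<otimes>\<^bsub>G\<^esub> ps y = ps y \<otimes>\<^bsub>G\<^esub> x"
    and in_K: "\<And>x y. x \<in> L \<Longrightarrow> y \<in> L \<Longrightarrow> x \<otimes>\<^bsub>G\<^esub> ps y \<in> K'"
begin

lemma alg:
  assumes "x \<in> L" "a \<in> L" "y \<in> L" "b \<in> L"
  shows "(x \<otimes>\<^bsub>G\<^esub> a) \<otimes>\<^bsub>G\<^esub> ps (y \<otimes>\<^bsub>G\<^esub> b) = (x \<otimes>\<^bsub>G\<^esub> ps y) \<otimes>\<^bsub>G\<^esub> (a \<otimes>\<^bsub>G\<^esub> ps b)"
proof -
  interpret group G by (rule grp)
  have c: "x \<in> carrier G" "a \<in> carrier G" "ps y \<in> carrier G" "ps b \<in> carrier G"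
    using assms L_sub ps_car by auto
  have "(x \<otimes>\<^bsub>G\<^esub> a) \<otimes>\<^bsub>G\<^esub> ps (y \<otimes>\<^bsub>G\<^esub> b) = x \<otimes>\<^bsub>G\<^esub> (a \<otimes>\<^bsub>G\<^esub> ps y) \<otimes>\<^bsub>G\<^esub> ps b"
    using c by (simp add: ps_hom assms m_assoc)
  also have "\<dots> = x \<otimes>\<^bsub>G\<^esub> (ps y \<otimes>\<^bsub>G\<^esub> a) \<otimes>\<^bsub>G\<^esub> ps b" using comm[OF assms(2,3)] by simp
  also have "\<dots> = (x \<otimes>\<^bsub>G\<^esub> ps y) \<otimes>\<^bsub>G\<^esub> (a \<otimes>\<^bsub>G\<^esub> ps b)" using c by (simp add: m_assoc)
  finally show ?thesis .
qed

lemma X_zero: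
  assumes "\<And>xs. xs \<in> lists K' \<Longrightarrow> length xs = length as + length bs - 1 \<Longrightarrow> F xs = 0"
      and "as \<in> lists L" "bs \<in> lists L"
  shows "Xc (monoid.mult G) ps F as bs = 0"
  using assms
proof (induction "length as + length bs" arbitrary: F as bs rule: less_induct)
  case less
  show ?case
  proof (cases "as = [] \<or> bs = []")
    case True then show ?thesis by auto
  next
    case ne: False
    show ?thesis
    proof (cases "length as = 1")
      case True
      then obtain x where a: "as = [x]" by (cases as) (auto simp: length_Suc_conv)
      show ?thesis using ne a less.prems in_K by (auto simp: Xc_a1 intro!: less.prems(1))
    next
      case na: False
      show ?thesis
      proof (cases "length bs = 1")
        case True
        then obtain y where b: "bs = [y]" by (cases bs) (auto simp: length_Suc_conv)
        show ?thesis using ne b less.prems in_K by (auto simp: Xc_b1 intro!: less.prems(1))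
      next
        case nb: False
        have "length as \<noteq> 0" "length bs \<noteq> 0" using ne by auto
        then have la: "2 \<le> length as" and lb: "2 \<le> length bs" using na nb by linarith+
        define v where "v = hd as \<otimes>\<^bsub>G\<^esub> ps (hd bs)"
        have vK: "v \<in> K'" unfolding v_def using less.prems ne by (intro in_K) (auto simp: lists_eq_set)
        have "Xc (monoid.mult G) ps F as bs = DD (Xc (monoid.mult G) ps (\<lambda>xs. F (v # xs))) as bs" by (simp add: Xc_rec[OF la lb] v_def)
        also have "\<dots> = 0"
        proof (rule DD_zero)
          fix i assume i: "i < length as"
          show "Xc (monoid.mult G) ps (\<lambda>xs. F (v # xs)) (delete_at i as) bs = 0"
            using i la lb vK less.prems
            by (intro less(1)) (auto simp: lists_delete_at length_delete_at' intro!: less.prems(1))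
        next
          fix j assume j: "j < length bs"
          show "Xc (monoid.mult G) ps (\<lambda>xs. F (v # xs)) as (delete_at j bs) = 0"
            using j la lb vK less.prems
            by (intro less(1)) (auto simp: lists_delete_at length_delete_at' intro!: less.prems(1))
        qed
        finally show ?thesis .
      qed
    qed
  qed
qed

lemma X_local:
  assumes "\<And>xs. xs \<in> lists K' \<Longrightarrow> length xs = length as + length bs - 1 \<Longrightarrow> F xs = F' xs"
      and "as \<in> lists L" "bs \<in> lists L"
  shows "Xc (monoid.mult G) ps F as bs = Xc (monoid.mult G) ps F' as bs"
  using X_zero[where F="\<lambda>xs. F xs - F' xs" and as=as and bs=bs] assms by (simp add: Xc_diff)

end


lemma fact_ge1_real: "1 \<le> (fact k :: real)"
  by (simp add: fact_ge_1)

lemma (in xsetting) X_bound: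
  assumes "\<And>xs. xs \<in> lists K' \<Longrightarrow> length xs = length as + length bs - 1 \<Longrightarrow> \<bar>F xs\<bar> \<le> c"
      and "0 \<le> c" and "as \<in> lists L" "bs \<in> lists L"
  shows "\<bar>Xc (monoid.mult G) ps F as bs\<bar> \<le> fact (length as + length bs) * c"
  using assms
proof (induction "length as + length bs" arbitrary: F as bs rule: less_induct)
  case less
  have base: "c \<le> fact (length as + length bs) * c"
    using fact_ge1_real[of "length as + length bs"] less.prems(2) by (simp add: mult_le_cancel_right1)
  show ?case
  proof (cases "as = [] \<or> bs = []")
    case True then show ?thesis using less.prems(2) by auto
  next
    case ne: False
    show ?thesis
    proof (cases "length as = 1")
      case True
      then obtain x where a: "as = [x]" by (cases as) (auto simp: length_Suc_conv)
      have "\<bar>Xc (monoid.mult G) ps F as bs\<bar> \<le> c"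
        using ne a less.prems in_K by (auto simp: Xc_a1 intro!: less.prems(1))
      then show ?thesis using base by linarith
    next
      case na: False
      show ?thesis
      proof (cases "length bs = 1")
        case True
        then obtain y where b: "bs = [y]" by (cases bs) (auto simp: length_Suc_conv)
        have "\<bar>Xc (monoid.mult G) ps F as bs\<bar> \<le> c"
          using ne b less.prems in_K by (auto simp: Xc_b1 intro!: less.prems(1))
        then show ?thesis using base by linarith
      next
        case nb: False
        have "length as \<noteq> 0" "length bs \<noteq> 0" using ne by auto
        then have la: "2 \<le> length as" and lb: "2 \<le> length bs" using na nb by linarith+
        define v where "v = hd as \<otimes>\<^bsub>G\<^esub> ps (hd bs)"
        have vK: "v \<in> K'" unfolding v_def using less.prems ne by (intro in_K) (auto simp: lists_eq_set)
        define k where "k = length as + length bs"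
        have kk: "k = Suc (k - 1)" using la by (simp add: k_def)
        have "Xc (monoid.mult G) ps F as bs = DD (Xc (monoid.mult G) ps (\<lambda>xs. F (v # xs))) as bs" by (simp add: Xc_rec[OF la lb] v_def)
        also have "\<bar>\<dots>\<bar> \<le> real (length as + length bs) * (fact (k - 1) * c)"
        proof (rule abs_DD_le)
          fix i assume i: "i < length as"
          show "\<bar>Xc (monoid.mult G) ps (\<lambda>xs. F (v # xs)) (delete_at i as) bs\<bar> \<le> fact (k - 1) * c"
            using less(1)[of "delete_at i as" bs "\<lambda>xs. F (v # xs)"] i la lb vK less.prems
            by (auto simp: lists_delete_at length_delete_at' k_def intro!: less.prems(1))
        next
          fix j assume j: "j < length bs"
          show "\<bar>Xc (monoid.mult G) ps (\<lambda>xs. F (v # xs)) as (delete_at j bs)\<bar> \<le> fact (k - 1) * c"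
            using less(1)[of as "delete_at j bs" "\<lambda>xs. F (v # xs)"] j la lb vK less.prems
            by (auto simp: lists_delete_at length_delete_at' k_def intro!: less.prems(1))
        qed
        also have "real (length as + length bs) * (fact (k - 1) * c) = fact (length as + length bs) * c"
        proof -
          have "(fact k :: real) = fact (Suc (k - 1))" using kk by simp
          also have "\<dots> = real (Suc (k - 1)) * fact (k - 1)" by (rule fact_Suc)
          finally have "(fact k :: real) = real k * fact (k - 1)" using kk by simp
          then show ?thesis by (simp add: k_def)
        qed
        finally show ?thesis .
      qed
    qed
  qed
qed

lemma (in xsetting) X_equiv:
  assumes "x \<in> L" "y \<in> L" "as \<in> lists L" "bs \<in> lists L"
  shows "Xc (monoid.mult G) ps F (map ((\<otimes>\<^bsub>G\<^esub>) x) as) (map ((\<otimes>\<^bsub>G\<^esub>) y) bs)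
       = Xc (monoid.mult G) ps (\<lambda>xs. F (map ((\<otimes>\<^bsub>G\<^esub>) (x \<otimes>\<^bsub>G\<^esub> ps y)) xs)) as bs"
  using assms(3,4)
proof (induction "length as + length bs" arbitrary: F as bs rule: less_induct)
  case less
  define c where "c = x \<otimes>\<^bsub>G\<^esub> ps y"
  show ?case
  proof (cases "as = [] \<or> bs = []")
    case True then show ?thesis by auto
  next
    case ne: False
    show ?thesis
    proof (cases "length as = 1")
      case True
      then obtain a where a: "as = [a]" by (cases as) (auto simp: length_Suc_conv)
      show ?thesis
        using ne a apply (simp add: Xc_a1 c_def)
        apply (rule arg_cong[where f=F])
        apply (rule map_cong[OF refl])
        using less.prems a assms by (auto simp: alg lists_eq_set)
    next
      case na: False
      show ?thesis
      proof (cases "length bs = 1")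
        case True
        then obtain b where b: "bs = [b]" by (cases bs) (auto simp: length_Suc_conv)
        show ?thesis
          using ne b apply (simp add: Xc_b1 c_def)
          apply (rule arg_cong[where f=F])
          apply (rule map_cong[OF refl])
          using less.prems b assms by (auto simp: alg lists_eq_set)
      next
        case nb: False
        have "length as \<noteq> 0" "length bs \<noteq> 0" using ne by auto
        then have la: "2 \<le> length as" and lb: "2 \<le> length bs" using na nb by linarith+
        define v where "v = hd as \<otimes>\<^bsub>G\<^esub> ps (hd bs)"
        have hds: "hd as \<in> L" "hd bs \<in> L" using less.prems ne by (auto simp: lists_eq_set)
        have v': "hd (map ((\<otimes>\<^bsub>G\<^esub>) x) as) \<otimes>\<^bsub>G\<^esub> ps (hd (map ((\<otimes>\<^bsub>G\<^esub>) y) bs)) = c \<otimes>\<^bsub>G\<^esub> v"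
          using ne hds assms by (simp add: hd_map alg c_def v_def)
        have la': "2 \<le> length (map ((\<otimes>\<^bsub>G\<^esub>) x) as)" and lb': "2 \<le> length (map ((\<otimes>\<^bsub>G\<^esub>) y) bs)"
          using la lb by simp_all
        have "Xc (monoid.mult G) ps F (map ((\<otimes>\<^bsub>G\<^esub>) x) as) (map ((\<otimes>\<^bsub>G\<^esub>) y) bs)
            = DD (\<lambda>a' b'. Xc (monoid.mult G) ps (\<lambda>xs. F ((c \<otimes>\<^bsub>G\<^esub> v) # xs)) (map ((\<otimes>\<^bsub>G\<^esub>) x) a') (map ((\<otimes>\<^bsub>G\<^esub>) y) b')) as bs"
          by (simp only: Xc_rec[OF la' lb'] v' DD_map)
        also have "\<dots> = DD (Xc (monoid.mult G) ps (\<lambda>xs. F (map ((\<otimes>\<^bsub>G\<^esub>) c) (v # xs)))) as bs"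
        proof (rule DD_cong)
          fix i assume i: "i < length as"
          show "Xc (monoid.mult G) ps (\<lambda>xs. F ((c \<otimes>\<^bsub>G\<^esub> v) # xs)) (map ((\<otimes>\<^bsub>G\<^esub>) x) (delete_at i as)) (map ((\<otimes>\<^bsub>G\<^esub>) y) bs)
              = Xc (monoid.mult G) ps (\<lambda>xs. F (map ((\<otimes>\<^bsub>G\<^esub>) c) (v # xs))) (delete_at i as) bs"
            using less(1)[of "delete_at i as" bs "\<lambda>xs. F ((c \<otimes>\<^bsub>G\<^esub> v) # xs)"] i la less.prems
            by (simp add: lists_delete_at length_delete_at' c_def)
        next
          fix j assume j: "j < length bs"
          show "Xc (monoid.mult G) ps (\<lambda>xs. F ((c \<otimes>\<^bsub>G\<^esub> v) # xs)) (map ((\<otimes>\<^bsub>G\<^esub>) x) as) (map ((\<otimes>\<^bsub>G\<^esub>) y) (delete_at j bs))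
              = Xc (monoid.mult G) ps (\<lambda>xs. F (map ((\<otimes>\<^bsub>G\<^esub>) c) (v # xs))) as (delete_at j bs)"
            using less(1)[of as "delete_at j bs" "\<lambda>xs. F ((c \<otimes>\<^bsub>G\<^esub> v) # xs)"] j lb less.prems
            by (simp add: lists_delete_at length_delete_at' c_def)
        qed
        also have "\<dots> = Xc (monoid.mult G) ps (\<lambda>xs. F (map ((\<otimes>\<^bsub>G\<^esub>) c) xs)) as bs"
          by (simp add: Xc_rec[OF la lb] v_def)
        finally show ?thesis by (simp add: c_def)
      qed
    qed
  qed
qed


fun tbf :: "(nat \<Rightarrow> real) \<Rightarrow> nat \<Rightarrow> real" where
  "tbf P 0 = 0"
| "tbf P (Suc k) = 1 + P (Suc k) + real (Suc k) * tbf P k"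

lemma tbf_nonneg: "(\<And>k. 0 \<le> P k) \<Longrightarrow> 0 \<le> tbf P k"
  by (induction k) (auto intro!: add_nonneg_nonneg)

locale tsetting =
  fixes G :: "('a, 'c) monoid_scheme" and ph :: "'a \<Rightarrow> 'a"
    and Ps :: "('a list \<Rightarrow> real) \<Rightarrow> 'a list \<Rightarrow> real" and L K' :: "'a set" and P :: "nat \<Rightarrow> real"
  assumes grp: "group G"
    and L_sub: "L \<subseteq> carrier G"
    and K_sub: "K' \<subseteq> carrier G"
    and ph_K: "\<And>x. x \<in> L \<Longrightarrow> ph x \<in> K'"
    and ph_hom: "\<And>x y. x \<in> L \<Longrightarrow> y \<in> L \<Longrightarrow> ph (x \<otimes>\<^bsub>G\<^esub> y) = ph x \<otimes>\<^bsub>G\<^esub> ph y"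
    and L_closed: "\<And>x y. x \<in> L \<Longrightarrow> y \<in> L \<Longrightarrow> x \<otimes>\<^bsub>G\<^esub> y \<in> L"
    and Ps_zero: "\<And>F s. (\<And>xs. xs \<in> lists K' \<Longrightarrow> length xs = length s \<Longrightarrow> F xs = 0) \<Longrightarrow> s \<in> lists L \<Longrightarrow> Ps F s = 0"
    and Ps_lin: "\<And>F F' s. Ps (\<lambda>xs. F xs - F' xs) s = Ps F s - Ps F' s"
    and Ps_equiv: "\<And>F s h. h \<in> L \<Longrightarrow> s \<in> lists L \<Longrightarrow>
        Ps F (map ((\<otimes>\<^bsub>G\<^esub>) h) s) = Ps (\<lambda>xs. F (map ((\<otimes>\<^bsub>G\<^esub>) (ph h)) xs)) s"
    and Ps_bound: "\<And>F s c. 0 \<le> c \<Longrightarrow> (\<And>xs. xs \<in> lists K' \<Longrightarrow> length xs = length s \<Longrightarrow> \<bar>F xs\<bar> \<le> c)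
        \<Longrightarrow> s \<in> lists L \<Longrightarrow> \<bar>Ps F s\<bar> \<le> P (length s) * c"
    and P_nonneg: "\<And>k. 0 \<le> P k"
begin

lemma T_zero:
  assumes "\<And>xs. xs \<in> lists K' \<Longrightarrow> length xs = Suc (length s) \<Longrightarrow> F xs = 0"
      and "s \<in> lists L"
  shows "Tc ph Ps F s = 0"
  using assms
proof (induction "length s" arbitrary: F s rule: less_induct)
  case less
  show ?case
  proof (cases "s = []")
    case True then show ?thesis by simp
  next
    case ne: False
    define v where "v = ph (hd s)"
    have vK: "v \<in> K'" using ne less.prems by (auto simp: v_def lists_eq_set intro!: ph_K)
    have 1: "F (v # map ph s) = 0"
      using vK less.prems ph_K by (intro less.prems(1)) (auto simp: lists_eq_set)
    have 2: "Ps (\<lambda>xs. F (v # xs)) s = 0"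
      using vK less.prems by (intro Ps_zero) (auto intro!: less.prems(1))
    have 3: "coboundary (Tc ph Ps (\<lambda>xs. F (v # xs))) s = 0"
    proof -
      have "coboundary (Tc ph Ps (\<lambda>xs. F (v # xs))) s = coboundary (\<lambda>_. 0) s"
      proof (rule coboundary_cong)
        fix i assume i: "i < length s"
        show "Tc ph Ps (\<lambda>xs. F (v # xs)) (delete_at i s) = 0"
          using i vK less.prems
          by (intro less(1)) (auto simp: length_delete_at' lists_delete_at intro!: less.prems(1))
      qed
      then show ?thesis by (simp add: coboundary_zero)
    qed
    show ?thesis using 1 2 3 ne by (simp add: Tc_Cons v_def)
  qed
qed

lemma T_local:
  assumes "\<And>xs. xs \<in> lists K' \<Longrightarrow> length xs = Suc (length s) \<Longrightarrow> F xs = F' xs"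
      and "s \<in> lists L"
  shows "Tc ph Ps F s = Tc ph Ps F' s"
  using T_zero[where F="\<lambda>xs. F xs - F' xs" and s=s] assms by (simp add: Tc_diff[OF Ps_lin])

lemma T_equiv:
  assumes "h \<in> L" "s \<in> lists L"
  shows "Tc ph Ps F (map ((\<otimes>\<^bsub>G\<^esub>) h) s) = Tc ph Ps (\<lambda>xs. F (map ((\<otimes>\<^bsub>G\<^esub>) (ph h)) xs)) s"
  using assms(2)
proof (induction "length s" arbitrary: F s rule: less_induct)
  case less
  define c where "c = ph h"
  show ?case
  proof (cases "s = []")
    case True then show ?thesis by simp
  next
    case ne: False
    define v where "v = ph (hd s)"
    have hs: "hd s \<in> L" using ne less.prems by (auto simp: lists_eq_set)
    have v': "ph (hd (map ((\<otimes>\<^bsub>G\<^esub>) h) s)) = c \<otimes>\<^bsub>G\<^esub> v"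
      using ne hs assms by (simp add: hd_map ph_hom c_def v_def)
    have ne': "map ((\<otimes>\<^bsub>G\<^esub>) h) s \<noteq> []" using ne by simp
    have m: "map ph (map ((\<otimes>\<^bsub>G\<^esub>) h) s) = map ((\<otimes>\<^bsub>G\<^esub>) c) (map ph s)"
      using less.prems assms by (auto simp: ph_hom c_def lists_eq_set)
    have 1: "F ((c \<otimes>\<^bsub>G\<^esub> v) # map ph (map ((\<otimes>\<^bsub>G\<^esub>) h) s)) = F (map ((\<otimes>\<^bsub>G\<^esub>) c) (v # map ph s))"
      by (simp only: m list.map)
    have 2: "Ps (\<lambda>xs. F ((c \<otimes>\<^bsub>G\<^esub> v) # xs)) (map ((\<otimes>\<^bsub>G\<^esub>) h) s) = Ps (\<lambda>xs. F (map ((\<otimes>\<^bsub>G\<^esub>) c) (v # xs))) s"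
      using Ps_equiv[OF assms(1) less.prems] by (simp add: c_def)
    have 3: "coboundary (Tc ph Ps (\<lambda>xs. F ((c \<otimes>\<^bsub>G\<^esub> v) # xs))) (map ((\<otimes>\<^bsub>G\<^esub>) h) s)
        = coboundary (Tc ph Ps (\<lambda>xs. F (map ((\<otimes>\<^bsub>G\<^esub>) c) (v # xs)))) s"
      unfolding coboundary_def length_map
    proof (intro sum.cong refl)
      fix i assume i: "i \<in> {..<length s}"
      have "Tc ph Ps (\<lambda>xs. F ((c \<otimes>\<^bsub>G\<^esub> v) # xs)) (delete_at i (map ((\<otimes>\<^bsub>G\<^esub>) h) s))
          = Tc ph Ps (\<lambda>xs. F ((c \<otimes>\<^bsub>G\<^esub> v) # xs)) (map ((\<otimes>\<^bsub>G\<^esub>) h) (delete_at i s))"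
        by (simp add: map_delete_at)
      also have "\<dots> = Tc ph Ps (\<lambda>xs. F (map ((\<otimes>\<^bsub>G\<^esub>) c) (v # xs))) (delete_at i s)"
        using less(1)[of "delete_at i s" "\<lambda>xs. F ((c \<otimes>\<^bsub>G\<^esub> v) # xs)"] i less.prems
        by (simp add: length_delete_at' lists_delete_at c_def)
      finally show "(-1) ^ i * Tc ph Ps (\<lambda>xs. F ((c \<otimes>\<^bsub>G\<^esub> v) # xs)) (delete_at i (map ((\<otimes>\<^bsub>G\<^esub>) h) s))
          = (-1) ^ i * Tc ph Ps (\<lambda>xs. F (map ((\<otimes>\<^bsub>G\<^esub>) c) (v # xs))) (delete_at i s)" by simp
    qed
    show ?thesis
      using ne ne' 1 2 3 v' by (simp add: Tc_Cons[OF ne'] Tc_Cons[OF ne] v_def c_def)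
  qed
qed

lemma T_bound:
  assumes "\<And>xs. xs \<in> lists K' \<Longrightarrow> length xs = Suc (length s) \<Longrightarrow> \<bar>F xs\<bar> \<le> c"
      and "0 \<le> c" and "s \<in> lists L"
  shows "\<bar>Tc ph Ps F s\<bar> \<le> tbf P (length s) * c"
  using assms
proof (induction "length s" arbitrary: F s rule: less_induct)
  case less
  show ?case
  proof (cases "s = []")
    case True then show ?thesis by simp
  next
    case ne: False
    then obtain k where k: "length s = Suc k" by (cases s) auto
    define v where "v = ph (hd s)"
    have vK: "v \<in> K'" using ne less.prems by (auto simp: v_def lists_eq_set intro!: ph_K)
    have 1: "\<bar>F (v # map ph s)\<bar> \<le> c"
      using vK less.prems ph_K by (intro less.prems(1)) (auto simp: lists_eq_set)
    have 2: "\<bar>Ps (\<lambda>xs. F (v # xs)) s\<bar> \<le> P (length s) * c"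
      using vK less.prems by (intro Ps_bound) (auto intro!: less.prems(1))
    have 3: "\<bar>coboundary (Tc ph Ps (\<lambda>xs. F (v # xs))) s\<bar> \<le> real (length s) * (tbf P k * c)"
    proof (rule abs_coboundary_le)
      fix i assume i: "i < length s"
      show "\<bar>Tc ph Ps (\<lambda>xs. F (v # xs)) (delete_at i s)\<bar> \<le> tbf P k * c"
        using less(1)[of "delete_at i s" "\<lambda>xs. F (v # xs)"] i vK less.prems k
        by (auto simp: length_delete_at' lists_delete_at intro!: less.prems(1))
    qed
    have "\<bar>Tc ph Ps F s\<bar> \<le> \<bar>F (v # map ph s)\<bar> + \<bar>Ps (\<lambda>xs. F (v # xs)) s\<bar> + \<bar>coboundary (Tc ph Ps (\<lambda>xs. F (v # xs))) s\<bar>"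
      using ne by (simp add: Tc_Cons v_def)
    also have "\<dots> \<le> c + P (length s) * c + real (length s) * (tbf P k * c)"
      using 1 2 3 by linarith
    also have "\<dots> = tbf P (length s) * c" using k by (simp add: algebra_simps)
    finally show ?thesis .
  qed
qed

lemma T_invariant:
  assumes inv: "\<And>k xs. k \<in> K' \<Longrightarrow> xs \<in> lists K' \<Longrightarrow> length xs = Suc (length s) \<Longrightarrow> F (map ((\<otimes>\<^bsub>G\<^esub>) k) xs) = F xs"
      and "h \<in> L" "s \<in> lists L"
  shows "Tc ph Ps F (map ((\<otimes>\<^bsub>G\<^esub>) h) s) = Tc ph Ps F s"
proof -
  have "Tc ph Ps F (map ((\<otimes>\<^bsub>G\<^esub>) h) s) = Tc ph Ps (\<lambda>xs. F (map ((\<otimes>\<^bsub>G\<^esub>) (ph h)) xs)) s"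
    by (rule T_equiv[OF assms(2,3)])
  also have "\<dots> = Tc ph Ps F s"
    using assms ph_K by (intro T_local) auto
  finally show ?thesis .
qed

end


lemma AWX_lin: "AW (Xc mul ps (\<lambda>xs. F xs - F' xs)) s = AW (Xc mul ps F) s - AW (Xc mul ps F') s"
proof -
  have "Xc mul ps (\<lambda>xs. F xs - F' xs) = (\<lambda>a b. Xc mul ps F a b - Xc mul ps F' a b)"
    by (intro ext) (rule Xc_diff)
  then show ?thesis by (simp add: AW_diff)
qed

lemma AWX_D:
  assumes "2 \<le> length s"
  shows "AW (Xc mul ps (coboundary F)) s = coboundary (AW (Xc mul ps F)) s"
proof -
  have "AW (Xc mul ps (coboundary F)) s = AW (DD (Xc mul ps F)) s"
  proof (rule AW_cong)
    fix p assume p: "p < length s"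
    show "Xc mul ps (coboundary F) (take (Suc p) s) (drop p s) = DD (Xc mul ps F) (take (Suc p) s) (drop p s)"
      using p assms by (intro Xc_chain) auto
  qed
  also have "\<dots> = coboundary (AW (Xc mul ps F)) s" by (rule AW_DD) auto
  finally show ?thesis .
qed

lemma AWX_0: "AW (Xc mul ps F) [x] = F [mul x (ps x)]"
  by (simp add: AW_def Xc_a1)

locale msetting = xsetting G ps L K' for G :: "('a, 'c) monoid_scheme" and ps L K' +
  fixes ph :: "'a \<Rightarrow> 'a" and g :: 'a
  assumes K_sub: "K' \<subseteq> carrier G"
    and L_closed: "\<And>x y. x \<in> L \<Longrightarrow> y \<in> L \<Longrightarrow> x \<otimes>\<^bsub>G\<^esub> y \<in> L"
    and K_closed: "\<And>x y. x \<in> K' \<Longrightarrow> y \<in> K' \<Longrightarrow> x \<otimes>\<^bsub>G\<^esub> y \<in> K'"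
    and ph_hom: "\<And>x y. x \<in> L \<Longrightarrow> y \<in> L \<Longrightarrow> ph (x \<otimes>\<^bsub>G\<^esub> y) = ph x \<otimes>\<^bsub>G\<^esub> ph y"
    and ph_eq: "\<And>x. x \<in> L \<Longrightarrow> ph x = x \<otimes>\<^bsub>G\<^esub> ps x"
    and g_K: "g \<in> K'"
begin

lemma ph_K: "x \<in> L \<Longrightarrow> ph x \<in> K'"
  using ph_eq in_K by simp

sublocale T1: tsetting G ph "\<lambda>F s. AW (Xc (monoid.mult G) ps F) s" L K' "\<lambda>k. real k * fact (Suc k)"
proof (rule tsetting.intro)
  show "group G" by (rule grp)
  show "L \<subseteq> carrier G" by (rule L_sub)
  show "K' \<subseteq> carrier G" by (rule K_sub)
  show "\<And>x. x \<in> L \<Longrightarrow> ph x \<in> K'" by (rule ph_K)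
  show "\<And>x y. x \<in> L \<Longrightarrow> y \<in> L \<Longrightarrow> ph (x \<otimes>\<^bsub>G\<^esub> y) = ph x \<otimes>\<^bsub>G\<^esub> ph y" by (rule ph_hom)
  show "\<And>x y. x \<in> L \<Longrightarrow> y \<in> L \<Longrightarrow> x \<otimes>\<^bsub>G\<^esub> y \<in> L" by (rule L_closed)
  show "\<And>k. 0 \<le> real k * fact (Suc k)" by simp
  show "AW (Xc (monoid.mult G) ps (\<lambda>xs. F xs - F' xs)) s = AW (Xc (monoid.mult G) ps F) s - AW (Xc (monoid.mult G) ps F') s"
    for F F' :: "'a list \<Rightarrow> real" and s by (rule AWX_lin)
next
  fix F :: "'a list \<Rightarrow> real" and s
  assume z: "\<And>xs. xs \<in> lists K' \<Longrightarrow> length xs = length s \<Longrightarrow> F xs = 0" and s: "s \<in> lists L"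
  show "AW (Xc (monoid.mult G) ps F) s = 0"
    unfolding AW_def
  proof (rule sum.neutral, rule ballI)
    fix p assume p: "p \<in> {..<length s}"
    show "Xc (monoid.mult G) ps F (take (Suc p) s) (drop p s) = 0"
      using p s by (intro X_zero) (auto intro!: z simp: lists_take lists_drop)
  qed
next
  fix F :: "'a list \<Rightarrow> real" and s h
  assume h: "h \<in> L" and s: "s \<in> lists L"
  have "AW (Xc (monoid.mult G) ps F) (map ((\<otimes>\<^bsub>G\<^esub>) h) s)
      = AW (\<lambda>x y. Xc (monoid.mult G) ps F (map ((\<otimes>\<^bsub>G\<^esub>) h) x) (map ((\<otimes>\<^bsub>G\<^esub>) h) y)) s"
    by (rule AW_map)
  also have "\<dots> = AW (Xc (monoid.mult G) ps (\<lambda>xs. F (map ((\<otimes>\<^bsub>G\<^esub>) (h \<otimes>\<^bsub>G\<^esub> ps h)) xs))) s"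
    using h s by (intro AW_cong X_equiv) (auto simp: lists_take lists_drop)
  finally show "AW (Xc (monoid.mult G) ps F) (map ((\<otimes>\<^bsub>G\<^esub>) h) s) =
       AW (Xc (monoid.mult G) ps (\<lambda>xs. F (map ((\<otimes>\<^bsub>G\<^esub>) (ph h)) xs))) s"
    using h by (simp add: ph_eq)
next
  fix F :: "'a list \<Rightarrow> real" and s and c :: real
  assume c: "0 \<le> c" and b: "\<And>xs. xs \<in> lists K' \<Longrightarrow> length xs = length s \<Longrightarrow> \<bar>F xs\<bar> \<le> c"
     and s: "s \<in> lists L"
  have "\<bar>AW (Xc (monoid.mult G) ps F) s\<bar> \<le> real (length s) * (fact (Suc (length s)) * c)"
  proof (rule abs_AW_le)
    fix p assume p: "p < length s"
    have "\<bar>Xc (monoid.mult G) ps F (take (Suc p) s) (drop p s)\<bar> \<le> fact (length (take (Suc p) s) + length (drop p s)) * c"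
      using p s c by (intro X_bound) (auto intro!: b simp: lists_take lists_drop)
    then show "\<bar>Xc (monoid.mult G) ps F (take (Suc p) s) (drop p s)\<bar> \<le> fact (Suc (length s)) * c"
      using p by simp
  qed
  then show "\<bar>AW (Xc (monoid.mult G) ps F) s\<bar> \<le> real (length s) * fact (Suc (length s)) * c"
    by (simp add: mult.assoc)
qed

sublocale T2: tsetting G ph "\<lambda>F s. F (map (\<lambda>x. ph x \<otimes>\<^bsub>G\<^esub> g) s)" L K' "\<lambda>k. 1"
proof (rule tsetting.intro)
  show "group G" by (rule grp)
  show "L \<subseteq> carrier G" by (rule L_sub)
  show "K' \<subseteq> carrier G" by (rule K_sub)
  show "\<And>x. x \<in> L \<Longrightarrow> ph x \<in> K'" by (rule ph_K)
  show "\<And>x y. x \<in> L \<Longrightarrow> y \<in> L \<Longrightarrow> ph (x \<otimes>\<^bsub>G\<^esub> y) = ph x \<otimes>\<^bsub>G\<^esub> ph y" by (rule ph_hom)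
  show "\<And>x y. x \<in> L \<Longrightarrow> y \<in> L \<Longrightarrow> x \<otimes>\<^bsub>G\<^esub> y \<in> L" by (rule L_closed)
  show "\<And>k. (0::real) \<le> 1" by simp
  show "(\<lambda>xs. F xs - F' xs) (map (\<lambda>x. ph x \<otimes>\<^bsub>G\<^esub> g) s) = F (map (\<lambda>x. ph x \<otimes>\<^bsub>G\<^esub> g) s) - F' (map (\<lambda>x. ph x \<otimes>\<^bsub>G\<^esub> g) s)"
    for F F' :: "'a list \<Rightarrow> real" and s by simp
next
  fix F :: "'a list \<Rightarrow> real" and s
  assume z: "\<And>xs. xs \<in> lists K' \<Longrightarrow> length xs = length s \<Longrightarrow> F xs = 0" and s: "s \<in> lists L"
  show "F (map (\<lambda>x. ph x \<otimes>\<^bsub>G\<^esub> g) s) = 0"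
    using s g_K by (intro z) (auto simp: lists_eq_set intro!: K_closed ph_K)
next
  fix F :: "'a list \<Rightarrow> real" and s h
  assume h: "h \<in> L" and s: "s \<in> lists L"
  interpret group G by (rule grp)
  show "F (map (\<lambda>x. ph x \<otimes>\<^bsub>G\<^esub> g) (map ((\<otimes>\<^bsub>G\<^esub>) h) s)) =
       F (map ((\<otimes>\<^bsub>G\<^esub>) (ph h)) (map (\<lambda>x. ph x \<otimes>\<^bsub>G\<^esub> g) s))"
    apply (rule arg_cong[where f=F])
    apply (simp only: map_map)
    apply (rule map_cong[OF refl])
    using h s g_K K_sub ph_K
    by (auto simp: lists_eq_set ph_hom m_assoc subset_iff)
next
  fix F :: "'a list \<Rightarrow> real" and s and c :: real
  assume c: "0 \<le> c" and b: "\<And>xs. xs \<in> lists K' \<Longrightarrow> length xs = length s \<Longrightarrow> \<bar>F xs\<bar> \<le> c"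
     and s: "s \<in> lists L"
  show "\<bar>F (map (\<lambda>x. ph x \<otimes>\<^bsub>G\<^esub> g) s)\<bar> \<le> 1 * c"
    using s g_K by simp (intro b, auto simp: lists_eq_set intro!: K_closed ph_K)
qed

end


definition primspec :: "('a, 'c) monoid_scheme \<Rightarrow> nat \<Rightarrow> real \<Rightarrow> 'a set \<Rightarrow> ('a list \<Rightarrow> real) \<Rightarrow> real \<Rightarrow> ('a list \<Rightarrow> real) \<Rightarrow> bool" where
  "primspec G q C K \<phi> c b \<longleftrightarrow>
     (\<forall>xs\<in>lists K. length xs = q \<longrightarrow> \<bar>b xs\<bar> \<le> C * c) \<and>
     (\<forall>k\<in>K. \<forall>xs\<in>lists K. length xs = q \<longrightarrow> b (map ((\<otimes>\<^bsub>G\<^esub>) k) xs) = b xs) \<and>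
     (\<forall>xs\<in>lists K. length xs = Suc q \<longrightarrow> \<phi> xs = coboundary b xs)"

definition goodpair :: "('a, 'c) monoid_scheme \<Rightarrow> nat \<Rightarrow> real \<Rightarrow> 'a set \<Rightarrow> 'a set \<Rightarrow> bool" where
  "goodpair G q C K K' \<longleftrightarrow> (\<forall>\<phi> c. 0 \<le> c \<longrightarrow>
     (\<forall>xs\<in>lists K'. length xs = Suc q \<longrightarrow> \<bar>\<phi> xs\<bar> \<le> c) \<longrightarrow>
     (\<forall>k\<in>K'. \<forall>xs\<in>lists K'. length xs = Suc q \<longrightarrow> \<phi> (map ((\<otimes>\<^bsub>G\<^esub>) k) xs) = \<phi> xs) \<longrightarrow>
     (\<forall>xs\<in>lists K'. length xs = Suc (Suc q) \<longrightarrow> coboundary \<phi> xs = 0) \<longrightarrow>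
     (\<exists>b. primspec G q C K \<phi> c b))"

fun cbf :: "nat \<Rightarrow> (nat \<Rightarrow> real) \<Rightarrow> nat \<Rightarrow> real" where
  "cbf n C 0 = 1"
| "cbf n C (Suc p) = cbf n C p * (1 + real (n + 2) * C (n - 1 - p))"

fun wbf :: "nat \<Rightarrow> (nat \<Rightarrow> real) \<Rightarrow> nat \<Rightarrow> real" where
  "wbf n C 0 = 0"
| "wbf n C (Suc p) = wbf n C p + C (n - 1 - p) * cbf n C p"

fun ebf :: "nat \<Rightarrow> (nat \<Rightarrow> real) \<Rightarrow> nat \<Rightarrow> real" where
  "ebf n C 0 = 0"
| "ebf n C (Suc p) = ebf n C p + real n * C (n - 1 - p) * cbf n C p"

lemma cbf_nonneg: "(\<And>q. 0 \<le> C q) \<Longrightarrow> 0 \<le> cbf n C p"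
  by (induction p) auto

lemma wbf_nonneg: "(\<And>q. 0 \<le> C q) \<Longrightarrow> 0 \<le> wbf n C p"
  by (induction p) (auto intro!: add_nonneg_nonneg mult_nonneg_nonneg cbf_nonneg)

lemma ebf_nonneg: "(\<And>q. 0 \<le> C q) \<Longrightarrow> 0 \<le> ebf n C p"
  by (induction p) (auto intro!: add_nonneg_nonneg mult_nonneg_nonneg cbf_nonneg)

locale zsetting =
  fixes G :: "('a, 'c) monoid_scheme" and n :: nat and M :: "nat \<Rightarrow> 'a set" and L :: "'a set"
    and C :: "nat \<Rightarrow> real" and B :: "'a list \<Rightarrow> 'a list \<Rightarrow> real" and c :: real
  assumes grp: "group G" and n1: "1 \<le> n"
    and Msub: "\<And>q. subgroup (M q) G" and Mmono: "\<And>q. M q \<subseteq> M (Suc q)"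
    and Lsub: "subgroup L G" and MinL: "M (n - 1) \<subseteq> L"
    and good: "\<And>q. 1 \<le> q \<Longrightarrow> q \<le> n - 1 \<Longrightarrow> goodpair G q (C q) (M (q - 1)) (M q)"
    and Cnn: "\<And>q. 0 \<le> C q" and c0: "0 \<le> c"
    and B0: "\<And>t. B [] t = 0" and B0': "\<And>a. B a [] = 0"
    and Bcoc: "\<And>a t. a \<in> lists L \<Longrightarrow> t \<in> lists L \<Longrightarrow> a \<noteq> [] \<Longrightarrow> t \<noteq> [] \<Longrightarrow> length a + length t = n + 3 \<Longrightarrow> DD B a t = 0"
    and Binv1: "\<And>x a t. x \<in> L \<Longrightarrow> a \<in> lists L \<Longrightarrow> t \<in> lists L \<Longrightarrow> B (map ((\<otimes>\<^bsub>G\<^esub>) x) a) t = B a t"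
    and Binv2: "\<And>y a t. y \<in> L \<Longrightarrow> a \<in> lists L \<Longrightarrow> t \<in> lists L \<Longrightarrow> B a (map ((\<otimes>\<^bsub>G\<^esub>) y) t) = B a t"
    and Bbd: "\<And>a t. a \<in> lists L \<Longrightarrow> t \<in> lists L \<Longrightarrow> length a + length t = n + 2 \<Longrightarrow> \<bar>B a t\<bar> \<le> c"
begin

lemma M_mono: "i \<le> j \<Longrightarrow> M i \<subseteq> M j"
  by (rule lift_Suc_mono_le[of M]) (use Mmono in auto)

lemma M_L: "j \<le> n - 1 \<Longrightarrow> M j \<subseteq> L"
  using M_mono MinL by blast

lemma lists_mono': "A \<subseteq> A' \<Longrightarrow> xs \<in> lists A \<Longrightarrow> xs \<in> lists A'"
  by (auto simp: lists_eq_set)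

lemma map_mult_lists: "subgroup H G \<Longrightarrow> x \<in> H \<Longrightarrow> xs \<in> lists H \<Longrightarrow> map ((\<otimes>\<^bsub>G\<^esub>) x) xs \<in> lists H"
  by (auto simp: lists_eq_set subgroup.m_closed)

definition zinv :: "nat \<Rightarrow> ('a list \<Rightarrow> 'a list \<Rightarrow> real) \<Rightarrow> ('a list \<Rightarrow> real) \<Rightarrow> ('a list \<Rightarrow> real) \<Rightarrow> bool" where
  "zinv p B' E w \<longleftrightarrow>
     (\<forall>t. B' [] t = 0) \<and> (\<forall>a. B' a [] = 0) \<and>
     (\<forall>a t. DD B' a t = DD B a t) \<and>
     (\<forall>x\<in>L. \<forall>a\<in>lists L. \<forall>t\<in>lists L. B' (map ((\<otimes>\<^bsub>G\<^esub>) x) a) t = B' a t) \<and>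
     (\<forall>y\<in>M (n - 1 - p). \<forall>a\<in>lists L. \<forall>t\<in>lists (M (n - 1 - p)). B' a (map ((\<otimes>\<^bsub>G\<^esub>) y) t) = B' a t) \<and>
     (\<forall>a\<in>lists L. \<forall>t\<in>lists (M (n - 1 - p)). 2 \<le> length a \<longrightarrow> length a \<le> Suc p \<longrightarrow> length a + length t = n + 2 \<longrightarrow> B' a t = 0) \<and>
     (\<forall>x t. B' [x] t = B [x] t) \<and>
     (\<forall>a\<in>lists L. \<forall>y\<in>M (n - 1 - p). length a = Suc n \<longrightarrow> B' a [y] = B a [y] - coboundary w a) \<and>
     (\<forall>h\<in>L. \<forall>a\<in>lists L. length a = n \<longrightarrow> w (map ((\<otimes>\<^bsub>G\<^esub>) h) a) = w a) \<and>
     (\<forall>a\<in>lists L. length a = n \<longrightarrow> \<bar>w a\<bar> \<le> wbf n C p * c) \<and>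
     (\<forall>\<sigma>\<in>lists (M 0). length \<sigma> = Suc n \<longrightarrow> AW B \<sigma> = AW B' \<sigma> + coboundary E \<sigma>) \<and>
     (\<forall>h\<in>M 0. \<forall>\<tau>\<in>lists (M 0). length \<tau> = n \<longrightarrow> E (map ((\<otimes>\<^bsub>G\<^esub>) h) \<tau>) = E \<tau>) \<and>
     (\<forall>\<tau>\<in>lists (M 0). length \<tau> = n \<longrightarrow> \<bar>E \<tau>\<bar> \<le> ebf n C p * c) \<and>
     (\<forall>a\<in>lists L. \<forall>t\<in>lists L. length a + length t = n + 2 \<longrightarrow> \<bar>B' a t\<bar> \<le> cbf n C p * c)"

lemma zinv0: "zinv 0 B (\<lambda>_. 0) (\<lambda>_. 0)"
proof -
  have "M (n - 1) \<subseteq> L" by (rule MinL)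
  then have inv2: "B a (map ((\<otimes>\<^bsub>G\<^esub>) y) t) = B a t" if "y \<in> M (n - 1)" "a \<in> lists L" "t \<in> lists (M (n - 1))" for y a t
    using that MinL by (intro Binv2) (auto simp: lists_eq_set)
  show ?thesis
    unfolding zinv_def using B0 B0' Binv1 Bbd inv2 by (auto simp: coboundary_def)
qed

lemma neg1_sq: "(-1::real) ^ k * (-1) ^ k = 1"
  by (simp add: power_mult_distrib[symmetric])

lemma zstep:
  assumes Z: "zinv p B' E w" and p: "p < n - 1"
  shows "\<exists>B'' E' w'. zinv (Suc p) B'' E' w'"
proof -
  interpret group G by (rule grp)
  define q where "q = n - 1 - p"
  have q1: "1 \<le> q" "q \<le> n - 1" using p by (auto simp: q_def)
  have qn: "n - 1 - Suc p = q - 1" by (simp add: q_def)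
  have npq: "n - Suc p = q" by (simp add: q_def)
  have nsum: "Suc (Suc p) + Suc q = n + 2" using p by (simp add: q_def)
  define K where "K = M (q - 1)"
  define K' where "K' = M q"
  have KK': "K \<subseteq> K'" unfolding K_def K'_def by (rule M_mono) simp
  have K'L: "K' \<subseteq> L" unfolding K'_def using q1(2) by (rule M_L)
  have KL: "K \<subseteq> L" using KK' K'L by blast
  have M0K: "M 0 \<subseteq> K" unfolding K_def by (rule M_mono) simp
  have sgK: "subgroup K G" "subgroup K' G" unfolding K_def K'_def by (rule Msub)+
  have zA: "\<And>t. B' [] t = 0" "\<And>a. B' a [] = 0" using Z by (simp_all add: zinv_def)
  have zB: "\<And>a t. DD B' a t = DD B a t" using Z by (simp add: zinv_def)
  have zC: "\<And>x a t. x \<in> L \<Longrightarrow> a \<in> lists L \<Longrightarrow> t \<in> lists L \<Longrightarrow> B' (map ((\<otimes>\<^bsub>G\<^esub>) x) a) t = B' a t"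
    using Z by (simp add: zinv_def)
  have zD: "\<And>y a t. y \<in> K' \<Longrightarrow> a \<in> lists L \<Longrightarrow> t \<in> lists K' \<Longrightarrow> B' a (map ((\<otimes>\<^bsub>G\<^esub>) y) t) = B' a t"
    using Z by (simp add: zinv_def npq K'_def)
  have zE: "\<And>a t. a \<in> lists L \<Longrightarrow> t \<in> lists K' \<Longrightarrow> 2 \<le> length a \<Longrightarrow> length a \<le> Suc p \<Longrightarrow> length a + length t = n + 2 \<Longrightarrow> B' a t = 0"
    using Z by (simp add: zinv_def npq K'_def)
  have zF: "\<And>x t. B' [x] t = B [x] t" using Z by (simp add: zinv_def)
  have zG: "\<And>a y. a \<in> lists L \<Longrightarrow> y \<in> K' \<Longrightarrow> length a = Suc n \<Longrightarrow> B' a [y] = B a [y] - coboundary w a"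
    using Z by (simp add: zinv_def npq K'_def)
  have zG2: "\<And>h a. h \<in> L \<Longrightarrow> a \<in> lists L \<Longrightarrow> length a = n \<Longrightarrow> w (map ((\<otimes>\<^bsub>G\<^esub>) h) a) = w a"
    using Z by (simp add: zinv_def)
  have zG3: "\<And>a. a \<in> lists L \<Longrightarrow> length a = n \<Longrightarrow> \<bar>w a\<bar> \<le> wbf n C p * c"
    using Z by (simp add: zinv_def)
  have zH: "\<And>\<sigma>. \<sigma> \<in> lists (M 0) \<Longrightarrow> length \<sigma> = Suc n \<Longrightarrow> AW B \<sigma> = AW B' \<sigma> + coboundary E \<sigma>"
    using Z by (simp add: zinv_def)
  have zH2: "\<And>h \<tau>. h \<in> M 0 \<Longrightarrow> \<tau> \<in> lists (M 0) \<Longrightarrow> length \<tau> = n \<Longrightarrow> E (map ((\<otimes>\<^bsub>G\<^esub>) h) \<tau>) = E \<tau>"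
    using Z by (simp add: zinv_def)
  have zH3: "\<And>\<tau>. \<tau> \<in> lists (M 0) \<Longrightarrow> length \<tau> = n \<Longrightarrow> \<bar>E \<tau>\<bar> \<le> ebf n C p * c"
    using Z by (simp add: zinv_def)
  have zI: "\<And>a t. a \<in> lists L \<Longrightarrow> t \<in> lists L \<Longrightarrow> length a + length t = n + 2 \<Longrightarrow> \<bar>B' a t\<bar> \<le> cbf n C p * c"
    using Z by (simp add: zinv_def)
  define cc where "cc = cbf n C p * c"
  have cc0: "0 \<le> cc" unfolding cc_def using cbf_nonneg[of C, OF Cnn] c0 by simp
  define \<phi> where "\<phi> a t = (if t \<in> lists K' then B' a t else 0)" for a t
  define prim where "prim a = (SOME b. primspec G q (C q) K (\<phi> a) cc b)" for a
  have prim_spec: "primspec G q (C q) K (\<phi> a) cc (prim a)"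
    if a: "a \<in> lists L" "length a = Suc (Suc p)" for a
  proof -
    have gp: "goodpair G q (C q) K K'" unfolding K_def K'_def using q1 by (rule good)
    have h1: "\<forall>xs\<in>lists K'. length xs = Suc q \<longrightarrow> \<bar>\<phi> a xs\<bar> \<le> cc"
    proof (intro ballI impI)
      fix xs assume xs: "xs \<in> lists K'" "length xs = Suc q"
      have xsL: "xs \<in> lists L" using lists_mono'[OF K'L xs(1)] .
      have "\<bar>B' a xs\<bar> \<le> cc" unfolding cc_def by (rule zI[OF a(1) xsL]) (use a xs nsum in simp)
      then show "\<bar>\<phi> a xs\<bar> \<le> cc" using xs by (simp add: \<phi>_def)
    qed
    have h2: "\<forall>k\<in>K'. \<forall>xs\<in>lists K'. length xs = Suc q \<longrightarrow> \<phi> a (map ((\<otimes>\<^bsub>G\<^esub>) k) xs) = \<phi> a xs"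
      using a sgK by (auto simp: \<phi>_def map_mult_lists zD)
    have h3: "\<forall>xs\<in>lists K'. length xs = Suc (Suc q) \<longrightarrow> coboundary (\<phi> a) xs = 0"
    proof (intro ballI impI)
      fix xs assume xs: "xs \<in> lists K'" "length xs = Suc (Suc q)"
      have xsL: "xs \<in> lists L" using lists_mono'[OF K'L xs(1)] .
      have "coboundary (\<phi> a) xs = d2 B' a xs"
        unfolding d2_def by (rule coboundary_cong) (use xs in \<open>simp add: \<phi>_def lists_delete_at\<close>)
      moreover have "d1 B' a xs = 0"
      proof (cases p)
        case 0
        then obtain a0 a1 where a01: "a = [a0, a1]" using a by (auto simp: length_Suc_conv)
        have L01: "a0 \<in> L" "a1 \<in> L" using a a01 by auto
        have sgL: "subgroup L G" by (rule Lsub)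
        have e: "a1 \<otimes>\<^bsub>G\<^esub> inv\<^bsub>G\<^esub> a0 \<otimes>\<^bsub>G\<^esub> a0 = a1"
          using L01 sgL by (simp add: subgroup.mem_carrier m_assoc)
        have "B [a1] xs = B (map ((\<otimes>\<^bsub>G\<^esub>) (a1 \<otimes>\<^bsub>G\<^esub> inv\<^bsub>G\<^esub> a0)) [a0]) xs" using e by simp
        also have "\<dots> = B [a0] xs"
          using L01 sgL xsL by (intro Binv1) (auto simp: subgroup.m_closed subgroup.m_inv_closed)
        finally have "B [a1] xs = B [a0] xs" .
        then show ?thesis using a01 by (simp add: d1_def coboundary_def delete_at_def zF)
      next
        case (Suc p')
        have "d1 B' a xs = coboundary (\<lambda>_. 0) xs" if False using that by simp
        have "d1 B' a xs = coboundary (\<lambda>z. 0) a"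
          unfolding d1_def
        proof (rule coboundary_cong)
          fix i assume i: "i < length a"
          show "B' (delete_at i a) xs = 0"
            using i a xs Suc nsum by (intro zE) (auto simp: lists_delete_at length_delete_at')
        qed
        then show ?thesis by (simp add: coboundary_zero)
      qed
      moreover have "DD B' a xs = 0"
      proof -
        have ne: "a \<noteq> []" "xs \<noteq> []" using a xs by auto
        have "DD B a xs = 0" by (rule Bcoc[OF a(1) xsL ne]) (use a xs nsum in simp)
        then show ?thesis using zB by simp
      qed
      ultimately show "coboundary (\<phi> a) xs = 0" by (simp add: DD_def)
    qed
    have "\<exists>b. primspec G q (C q) K (\<phi> a) cc b"
      using gp cc0 h1 h2 h3 unfolding goodpair_def by blast
    then show ?thesis unfolding prim_def by (rule someI_ex)
  qed
  have pspec: "(\<forall>xs\<in>lists K. length xs = q \<longrightarrow> \<bar>prim a xs\<bar> \<le> C q * cc) \<and>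
      (\<forall>k\<in>K. \<forall>xs\<in>lists K. length xs = q \<longrightarrow> prim a (map ((\<otimes>\<^bsub>G\<^esub>) k) xs) = prim a xs) \<and>
      (\<forall>xs\<in>lists K. length xs = Suc q \<longrightarrow> \<phi> a xs = coboundary (prim a) xs)"
    if "a \<in> lists L" "length a = Suc (Suc p)" for a
    using prim_spec[OF that] by (simp add: primspec_def)
  define bb where "bb a t = (if a \<in> lists L \<and> length a = Suc (Suc p) \<and> t \<in> lists K \<and> length t = q
      then (-1) ^ Suc p * prim a t else 0)" for a t
  have Cq: "0 \<le> C q * cc" using Cnn[of q] cc0 by simp
  have bb_bd: "\<bar>bb a t\<bar> \<le> C q * cc" for a t
    using pspec[of a] Cq by (auto simp: bb_def abs_mult)
  have bb_len: "bb a t = 0" if "length a \<noteq> Suc (Suc p)" for a t using that by (simp add: bb_def)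
  have bb_len2: "bb a t = 0" if "length t \<noteq> q" for a t using that by (simp add: bb_def)
  have phi_inv: "\<phi> (map ((\<otimes>\<^bsub>G\<^esub>) x) a) = \<phi> a" if "x \<in> L" "a \<in> lists L" for x a
  proof (rule ext)
    fix t show "\<phi> (map ((\<otimes>\<^bsub>G\<^esub>) x) a) t = \<phi> a t"
    proof (cases "t \<in> lists K'")
      case True
      then have "t \<in> lists L" using lists_mono'[OF K'L] by blast
      then show ?thesis using True that by (simp add: \<phi>_def zC)
    qed (simp add: \<phi>_def)
  qed
  have bb_inv1: "bb (map ((\<otimes>\<^bsub>G\<^esub>) x) a) t = bb a t" if "x \<in> L" "a \<in> lists L" for x a t
  proof -
    have "map ((\<otimes>\<^bsub>G\<^esub>) x) a \<in> lists L" by (rule map_mult_lists[OF Lsub that])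
    moreover have "prim (map ((\<otimes>\<^bsub>G\<^esub>) x) a) = prim a" by (simp add: prim_def phi_inv[OF that])
    ultimately show ?thesis using that by (simp add: bb_def)
  qed
  have bb_inv2: "bb a (map ((\<otimes>\<^bsub>G\<^esub>) y) t) = bb a t" if "y \<in> K" "t \<in> lists K" for a y t
  proof (cases "a \<in> lists L \<and> length a = Suc (Suc p) \<and> length t = q")
    case True
    have "map ((\<otimes>\<^bsub>G\<^esub>) y) t \<in> lists K" by (rule map_mult_lists[OF sgK(1) that])
    then show ?thesis using True that pspec[of a] by (simp add: bb_def)
  next
    case False then show ?thesis by (auto simp: bb_def)
  qed
  have DDbb_low: "DD bb a t = 0" if "length a \<le> Suc p" for a t
    by (rule DD_zero) (use that in \<open>auto simp: bb_len length_delete_at'\<close>)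
  have DDbb_nil2: "DD bb a [] = 0" for a
    by (rule DD_zero) (use q1 in \<open>auto simp: bb_len2\<close>)
  have DDbb_top: "DD bb a t = B' a t"
    if a: "a \<in> lists L" "length a = Suc (Suc p)" and t: "t \<in> lists K" "length t = Suc q" for a t
  proof -
    have d1z: "d1 bb a t = 0"
    proof -
      have "d1 bb a t = coboundary (\<lambda>z. 0) a"
        unfolding d1_def by (rule coboundary_cong) (use a in \<open>simp add: bb_len length_delete_at'\<close>)
      then show ?thesis by (simp add: coboundary_zero)
    qed
    have "d2 bb a t = coboundary (\<lambda>s. (-1) ^ Suc p * prim a s) t"
      unfolding d2_def by (rule coboundary_cong) (use a t in \<open>simp add: bb_def lists_delete_at length_delete_at'\<close>)
    also have "\<dots> = (-1) ^ Suc p * coboundary (prim a) t" by (rule coboundary_scale)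
    also have "coboundary (prim a) t = \<phi> a t" using pspec[OF a] t by simp
    also have "\<phi> a t = B' a t" using t lists_mono'[OF KK'] by (auto simp: \<phi>_def)
    finally have "d2 bb a t = (-1) ^ Suc p * B' a t" .
    then have "DD bb a t = (-1) ^ Suc p * (-1) ^ Suc p * B' a t" using d1z a by (simp add: DD_def)
    then show ?thesis by (simp only: neg1_sq mult_1)
  qed
  have oneK: "\<one>\<^bsub>G\<^esub> \<in> K" using sgK(1) by (rule subgroup.one_closed)
  have DDbb_y: "DD bb a [y] = coboundary (\<lambda>z. bb z [\<one>\<^bsub>G\<^esub>]) a" if "a \<in> lists L" "y \<in> K" for a y
  proof -
    have "d2 bb a [y] = 0" using q1 by (simp add: d2_def coboundary_single bb_len2)
    moreover have "d1 bb a [y] = coboundary (\<lambda>z. bb z [\<one>\<^bsub>G\<^esub>]) a"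
      unfolding d1_def
    proof (rule coboundary_cong)
      fix i
      have "[y] = map ((\<otimes>\<^bsub>G\<^esub>) y) [\<one>\<^bsub>G\<^esub>]" using that sgK(1) by (simp add: subgroup.mem_carrier)
      then show "bb (delete_at i a) [y] = bb (delete_at i a) [\<one>\<^bsub>G\<^esub>]"
        using bb_inv2[OF that(2), of "[\<one>\<^bsub>G\<^esub>]" "delete_at i a"] oneK by simp
    qed
    ultimately show ?thesis by (simp add: DD_def)
  qed
  have DDbb_inv1: "DD bb (map ((\<otimes>\<^bsub>G\<^esub>) x) a) t = DD bb a t" if "x \<in> L" "a \<in> lists L" for x a t
  proof -
    have "DD bb (map ((\<otimes>\<^bsub>G\<^esub>) x) a) t = DD bb (map ((\<otimes>\<^bsub>G\<^esub>) x) a) (map id t)" by simp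
    also have "\<dots> = DD (\<lambda>a' t'. bb (map ((\<otimes>\<^bsub>G\<^esub>) x) a') (map id t')) a t" by (rule DD_map)
    also have "\<dots> = DD bb a t"
      by (rule DD_cong) (use that in \<open>simp_all add: bb_inv1 lists_delete_at\<close>)
    finally show ?thesis .
  qed
  have DDbb_inv2: "DD bb a (map ((\<otimes>\<^bsub>G\<^esub>) y) t) = DD bb a t" if "y \<in> K" "t \<in> lists K" for a y t
  proof -
    have "DD bb a (map ((\<otimes>\<^bsub>G\<^esub>) y) t) = DD bb (map id a) (map ((\<otimes>\<^bsub>G\<^esub>) y) t)" by simp
    also have "\<dots> = DD (\<lambda>a' t'. bb (map id a') (map ((\<otimes>\<^bsub>G\<^esub>) y) t')) a t" by (rule DD_map)
    also have "\<dots> = DD bb a t"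
      by (rule DD_cong) (use that in \<open>simp_all add: bb_inv2 lists_delete_at\<close>)
    finally show ?thesis .
  qed
  define B'' where "B'' a t = B' a t - DD bb a t" for a t
  define E' where "E' \<tau> = E \<tau> + AW bb \<tau>" for \<tau>
  define w' where "w' a = w a + bb a [\<one>\<^bsub>G\<^esub>]" for a
  have K_eq: "M (n - 1 - Suc p) = K" by (simp add: K_def q_def)
  have P1: "\<forall>t. B'' [] t = 0" using zA DDbb_low by (simp add: B''_def)
  have P2: "\<forall>a. B'' a [] = 0" using zA DDbb_nil2 by (simp add: B''_def)
  have P3: "\<forall>a t. DD B'' a t = DD B a t"
  proof (intro allI)
    fix a t
    have "DD B'' a t = DD B' a t - DD (DD bb) a t" unfolding B''_def[abs_def] by (rule DD_diff)
    then show "DD B'' a t = DD B a t" by (simp add: DD_DD zB)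
  qed
  have P4: "\<forall>x\<in>L. \<forall>a\<in>lists L. \<forall>t\<in>lists L. B'' (map ((\<otimes>\<^bsub>G\<^esub>) x) a) t = B'' a t"
    by (simp add: B''_def zC DDbb_inv1)
  have P5: "\<forall>y\<in>K. \<forall>a\<in>lists L. \<forall>t\<in>lists K. B'' a (map ((\<otimes>\<^bsub>G\<^esub>) y) t) = B'' a t"
  proof (intro ballI)
    fix y a t assume y: "y \<in> K" and a: "a \<in> lists L" and t: "t \<in> lists K"
    have "B' a (map ((\<otimes>\<^bsub>G\<^esub>) y) t) = B' a t"
      using y t KK' lists_mono'[OF KK' t] a by (intro zD) auto
    then show "B'' a (map ((\<otimes>\<^bsub>G\<^esub>) y) t) = B'' a t" using y t by (simp add: B''_def DDbb_inv2)
  qed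
  have P6: "\<forall>a\<in>lists L. \<forall>t\<in>lists K. 2 \<le> length a \<longrightarrow> length a \<le> Suc (Suc p) \<longrightarrow> length a + length t = n + 2 \<longrightarrow> B'' a t = 0"
  proof (intro ballI impI)
    fix a t assume a: "a \<in> lists L" and t: "t \<in> lists K" and l: "2 \<le> length a" "length a \<le> Suc (Suc p)" "length a + length t = n + 2"
    show "B'' a t = 0"
    proof (cases "length a \<le> Suc p")
      case True
      have "B' a t = 0" using a lists_mono'[OF KK' t] l True by (intro zE) auto
      then show ?thesis using True by (simp add: B''_def DDbb_low)
    next
      case False
      then have la: "length a = Suc (Suc p)" using l by simp
      then have lt: "length t = Suc q" using l nsum by simp
      show ?thesis using DDbb_top[OF a la t lt] by (simp add: B''_def)
    qed
  qed
  have P7: "\<forall>x t. B'' [x] t = B [x] t" using zF DDbb_low by (simp add: B''_def)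
  have P8: "\<forall>a\<in>lists L. \<forall>y\<in>K. length a = Suc n \<longrightarrow> B'' a [y] = B a [y] - coboundary w' a"
  proof (intro ballI impI)
    fix a y assume a: "a \<in> lists L" and y: "y \<in> K" and l: "length a = Suc n"
    have "B' a [y] = B a [y] - coboundary w a" using a y KK' l by (intro zG) auto
    moreover have "coboundary w' a = coboundary w a + coboundary (\<lambda>z. bb z [\<one>\<^bsub>G\<^esub>]) a"
      unfolding w'_def by (rule coboundary_add)
    ultimately show "B'' a [y] = B a [y] - coboundary w' a"
      using DDbb_y[OF a y] by (simp add: B''_def)
  qed
  have P9: "\<forall>h\<in>L. \<forall>a\<in>lists L. length a = n \<longrightarrow> w' (map ((\<otimes>\<^bsub>G\<^esub>) h) a) = w' a"
    by (simp add: w'_def zG2 bb_inv1)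
  have P10: "\<forall>a\<in>lists L. length a = n \<longrightarrow> \<bar>w' a\<bar> \<le> wbf n C (Suc p) * c"
  proof (intro ballI impI)
    fix a assume a: "a \<in> lists L" "length a = n"
    have "\<bar>w' a\<bar> \<le> \<bar>w a\<bar> + \<bar>bb a [\<one>\<^bsub>G\<^esub>]\<bar>" unfolding w'_def by (rule abs_triangle_ineq)
    also have "\<dots> \<le> wbf n C p * c + C q * cc" using zG3[OF a] bb_bd by (intro add_mono)
    also have "\<dots> = wbf n C (Suc p) * c" by (simp add: cc_def q_def algebra_simps)
    finally show "\<bar>w' a\<bar> \<le> wbf n C (Suc p) * c" .
  qed
  have P11: "\<forall>\<sigma>\<in>lists (M 0). length \<sigma> = Suc n \<longrightarrow> AW B \<sigma> = AW B'' \<sigma> + coboundary E' \<sigma>"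
  proof (intro ballI impI)
    fix \<sigma> assume s: "\<sigma> \<in> lists (M 0)" "length \<sigma> = Suc n"
    have "AW B'' \<sigma> = AW B' \<sigma> - AW (DD bb) \<sigma>" unfolding B''_def[abs_def] by (rule AW_diff)
    moreover have "AW (DD bb) \<sigma> = coboundary (AW bb) \<sigma>" by (rule AW_DD) (use q1 in \<open>simp_all add: bb_len bb_len2\<close>)
    moreover have "coboundary E' \<sigma> = coboundary E \<sigma> + coboundary (AW bb) \<sigma>" unfolding E'_def by (rule coboundary_add)
    ultimately show "AW B \<sigma> = AW B'' \<sigma> + coboundary E' \<sigma>" using zH[OF s] by simp
  qed
  have M0L: "M 0 \<subseteq> L" using M_L by simp
  have P12: "\<forall>h\<in>M 0. \<forall>\<tau>\<in>lists (M 0). length \<tau> = n \<longrightarrow> E' (map ((\<otimes>\<^bsub>G\<^esub>) h) \<tau>) = E' \<tau>"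
  proof (intro ballI impI)
    fix h \<tau> assume h: "h \<in> M 0" and t: "\<tau> \<in> lists (M 0)" and l: "length \<tau> = n"
    have "AW bb (map ((\<otimes>\<^bsub>G\<^esub>) h) \<tau>) = AW (\<lambda>x y. bb (map ((\<otimes>\<^bsub>G\<^esub>) h) x) (map ((\<otimes>\<^bsub>G\<^esub>) h) y)) \<tau>"
      by (rule AW_map)
    also have "\<dots> = AW bb \<tau>"
    proof (rule AW_cong)
      fix k assume k: "k < length \<tau>"
      have tL: "take (Suc k) \<tau> \<in> lists L" using lists_take[OF lists_mono'[OF M0L t]] .
      have dK: "drop k \<tau> \<in> lists K" using lists_drop[OF lists_mono'[OF M0K t]] .
      have hL: "h \<in> L" "h \<in> K" using h M0L M0K by auto
      show "bb (map ((\<otimes>\<^bsub>G\<^esub>) h) (take (Suc k) \<tau>)) (map ((\<otimes>\<^bsub>G\<^esub>) h) (drop k \<tau>)) = bb (take (Suc k) \<tau>) (drop k \<tau>)"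
        using bb_inv1[OF hL(1) tL] bb_inv2[OF hL(2) dK] by simp
    qed
    finally show "E' (map ((\<otimes>\<^bsub>G\<^esub>) h) \<tau>) = E' \<tau>" using zH2[OF h t l] by (simp add: E'_def)
  qed
  have P13: "\<forall>\<tau>\<in>lists (M 0). length \<tau> = n \<longrightarrow> \<bar>E' \<tau>\<bar> \<le> ebf n C (Suc p) * c"
  proof (intro ballI impI)
    fix \<tau> assume t: "\<tau> \<in> lists (M 0)" "length \<tau> = n"
    have "\<bar>AW bb \<tau>\<bar> \<le> real (length \<tau>) * (C q * cc)" by (rule abs_AW_le) (rule bb_bd)
    then have "\<bar>E' \<tau>\<bar> \<le> ebf n C p * c + real n * (C q * cc)"
      using zH3[OF t] t(2) unfolding E'_def by (smt (verit))
    also have "\<dots> = ebf n C (Suc p) * c" by (simp add: cc_def q_def algebra_simps)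
    finally show "\<bar>E' \<tau>\<bar> \<le> ebf n C (Suc p) * c" .
  qed
  have P14: "\<forall>a\<in>lists L. \<forall>t\<in>lists L. length a + length t = n + 2 \<longrightarrow> \<bar>B'' a t\<bar> \<le> cbf n C (Suc p) * c"
  proof (intro ballI impI)
    fix a t assume a: "a \<in> lists L" and t: "t \<in> lists L" and l: "length a + length t = n + 2"
    have "\<bar>DD bb a t\<bar> \<le> real (length a + length t) * (C q * cc)" by (rule abs_DD_le) (rule bb_bd)+
    then have "\<bar>B'' a t\<bar> \<le> cbf n C p * c + real (n + 2) * (C q * cc)"
      using zI[OF a t l] l unfolding B''_def by (smt (verit))
    also have "\<dots> = cbf n C (Suc p) * c" by (simp add: cc_def q_def algebra_simps)
    finally show "\<bar>B'' a t\<bar> \<le> cbf n C (Suc p) * c" .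
  qed
  have "zinv (Suc p) B'' E' w'"
    unfolding zinv_def K_eq using P1 P2 P3 P4 P5 P6 P7 P8 P9 P10 P11 P12 P13 P14 by blast
  then show ?thesis by blast
qed

lemma zreach: "p \<le> n - 1 \<Longrightarrow> \<exists>B' E w. zinv p B' E w"
proof (induction p)
  case 0 then show ?case using zinv0 by blast
next
  case (Suc p)
  then obtain B' E w where "zinv p B' E w" by auto
  then show ?case using zstep[of p B' E w] Suc.prems by auto
qed

lemma zfinal:
  "\<exists>e. (\<forall>\<tau>\<in>lists (M 0). length \<tau> = n \<longrightarrow> \<bar>e \<tau>\<bar> \<le> (ebf n C (n - 1) + wbf n C (n - 1)) * c) \<and>
       (\<forall>h\<in>M 0. \<forall>\<tau>\<in>lists (M 0). length \<tau> = n \<longrightarrow> e (map ((\<otimes>\<^bsub>G\<^esub>) h) \<tau>) = e \<tau>) \<and>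
       (\<forall>\<sigma>\<in>lists (M 0). length \<sigma> = Suc n \<longrightarrow> AW B \<sigma> = B [hd \<sigma>] \<sigma> + B \<sigma> [last \<sigma>] + coboundary e \<sigma>)"
proof -
  obtain B' E w where Z: "zinv (n - 1) B' E w" using zreach by blast
  have M0L: "M 0 \<subseteq> L" using M_L by simp
  have zE: "\<And>a t. a \<in> lists L \<Longrightarrow> t \<in> lists (M 0) \<Longrightarrow> 2 \<le> length a \<Longrightarrow> length a \<le> n \<Longrightarrow> length a + length t = n + 2 \<Longrightarrow> B' a t = 0"
    using Z n1 by (simp add: zinv_def)
  have zF: "\<And>x t. B' [x] t = B [x] t" using Z by (simp add: zinv_def)
  have zG: "\<And>a y. a \<in> lists L \<Longrightarrow> y \<in> M 0 \<Longrightarrow> length a = Suc n \<Longrightarrow> B' a [y] = B a [y] - coboundary w a"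
    using Z by (simp add: zinv_def)
  have zG2: "\<And>h a. h \<in> L \<Longrightarrow> a \<in> lists L \<Longrightarrow> length a = n \<Longrightarrow> w (map ((\<otimes>\<^bsub>G\<^esub>) h) a) = w a"
    using Z by (simp add: zinv_def)
  have zG3: "\<And>a. a \<in> lists L \<Longrightarrow> length a = n \<Longrightarrow> \<bar>w a\<bar> \<le> wbf n C (n - 1) * c"
    using Z by (simp add: zinv_def)
  have zH: "\<And>\<sigma>. \<sigma> \<in> lists (M 0) \<Longrightarrow> length \<sigma> = Suc n \<Longrightarrow> AW B \<sigma> = AW B' \<sigma> + coboundary E \<sigma>"
    using Z by (simp add: zinv_def)
  have zH2: "\<And>h \<tau>. h \<in> M 0 \<Longrightarrow> \<tau> \<in> lists (M 0) \<Longrightarrow> length \<tau> = n \<Longrightarrow> E (map ((\<otimes>\<^bsub>G\<^esub>) h) \<tau>) = E \<tau>"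
    using Z by (simp add: zinv_def)
  have zH3: "\<And>\<tau>. \<tau> \<in> lists (M 0) \<Longrightarrow> length \<tau> = n \<Longrightarrow> \<bar>E \<tau>\<bar> \<le> ebf n C (n - 1) * c"
    using Z by (simp add: zinv_def)
  define e where "e \<tau> = E \<tau> - w \<tau>" for \<tau>
  have e1: "\<forall>\<tau>\<in>lists (M 0). length \<tau> = n \<longrightarrow> \<bar>e \<tau>\<bar> \<le> (ebf n C (n - 1) + wbf n C (n - 1)) * c"
  proof (intro ballI impI)
    fix \<tau> assume t: "\<tau> \<in> lists (M 0)" "length \<tau> = n"
    have tL: "\<tau> \<in> lists L" using lists_mono'[OF M0L t(1)] .
    show "\<bar>e \<tau>\<bar> \<le> (ebf n C (n - 1) + wbf n C (n - 1)) * c"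
      using zH3[OF t] zG3[OF tL t(2)] unfolding e_def by (simp add: algebra_simps)
  qed
  have e2: "\<forall>h\<in>M 0. \<forall>\<tau>\<in>lists (M 0). length \<tau> = n \<longrightarrow> e (map ((\<otimes>\<^bsub>G\<^esub>) h) \<tau>) = e \<tau>"
  proof (intro ballI impI)
    fix h \<tau> assume h: "h \<in> M 0" and t: "\<tau> \<in> lists (M 0)" and l: "length \<tau> = n"
    have "h \<in> L" "\<tau> \<in> lists L" using h M0L lists_mono'[OF M0L t] by auto
    then show "e (map ((\<otimes>\<^bsub>G\<^esub>) h) \<tau>) = e \<tau>" using zH2[OF h t l] zG2 l by (simp add: e_def)
  qed
  have e3: "\<forall>\<sigma>\<in>lists (M 0). length \<sigma> = Suc n \<longrightarrow> AW B \<sigma> = B [hd \<sigma>] \<sigma> + B \<sigma> [last \<sigma>] + coboundary e \<sigma>"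
  proof (intro ballI impI)
    fix \<sigma> assume s: "\<sigma> \<in> lists (M 0)" and l: "length \<sigma> = Suc n"
    have sL: "\<sigma> \<in> lists L" using lists_mono'[OF M0L s] .
    obtain n' where n': "n = Suc n'" using n1 by (cases n) auto
    have ne: "\<sigma> \<noteq> []" using l by auto
    have last: "last \<sigma> \<in> M 0" using s ne by (auto simp: lists_eq_set)
    have dropn: "drop n \<sigma> = [last \<sigma>]"
    proof -
      have "drop n \<sigma> = \<sigma> ! n # drop (Suc n) \<sigma>" using l by (metis Cons_nth_drop_Suc lessI)
      moreover have "last \<sigma> = \<sigma> ! n" using ne l by (simp add: last_conv_nth)
      ultimately show ?thesis using l by simp
    qed
    have take1: "take (Suc 0) \<sigma> = [hd \<sigma>]" using ne by (cases \<sigma>) auto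
    have "AW B' \<sigma> = (\<Sum>k<Suc n. B' (take (Suc k) \<sigma>) (drop k \<sigma>))" using l by (simp add: AW_def)
    also have "\<dots> = (\<Sum>k<n. B' (take (Suc k) \<sigma>) (drop k \<sigma>)) + B' \<sigma> [last \<sigma>]"
      using l dropn by simp
    also have "(\<Sum>k<n. B' (take (Suc k) \<sigma>) (drop k \<sigma>)) = B' [hd \<sigma>] \<sigma> + (\<Sum>k<n'. B' (take (Suc (Suc k)) \<sigma>) (drop (Suc k) \<sigma>))"
      unfolding n' by (subst sum.lessThan_Suc_shift) (simp add: take1)
    also have "(\<Sum>k<n'. B' (take (Suc (Suc k)) \<sigma>) (drop (Suc k) \<sigma>)) = 0"
    proof (rule sum.neutral, rule ballI)
      fix k assume k: "k \<in> {..<n'}"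
      show "B' (take (Suc (Suc k)) \<sigma>) (drop (Suc k) \<sigma>) = 0"
        using k l n' by (intro zE) (auto simp: lists_take lists_drop sL s)
    qed
    finally have "AW B' \<sigma> = B [hd \<sigma>] \<sigma> + (B \<sigma> [last \<sigma>] - coboundary w \<sigma>)"
      using zF zG[OF sL last l] by simp
    then show "AW B \<sigma> = B [hd \<sigma>] \<sigma> + B \<sigma> [last \<sigma>] + coboundary e \<sigma>"
      using zH[OF s l] unfolding e_def by (simp add: coboundary_diff)
  qed
  show ?thesis using e1 e2 e3 by blast
qed

end


definition Vn :: "('a, 'c) monoid_scheme \<Rightarrow> nat \<Rightarrow> bool" where
  "Vn G q \<longleftrightarrow> (\<exists>C. 0 \<le> C \<and> (\<forall>S. finite S \<and> S \<subseteq> carrier G \<longrightarrow>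
     (\<exists>S'. finite S' \<and> S \<subseteq> S' \<and> S' \<subseteq> carrier G \<and> goodpair G q C (generate G S) (generate G S'))))"

lemma hom_sub_group_hom:
  assumes "group G" "subgroup L G" "\<psi> \<in> hom (G\<lparr>carrier := L\<rparr>) G"
  shows "group_hom (G\<lparr>carrier := L\<rparr>) G \<psi>"
  using assms group.subgroup_imp_group by (auto simp: group_hom_def group_hom_axioms_def)

lemma hom_generate_sub:
  assumes grp: "group G" and L: "subgroup L G" and h: "\<psi> \<in> hom (G\<lparr>carrier := L\<rparr>) G" and SL: "SL \<subseteq> L"
  shows "\<psi> ` generate G SL \<subseteq> generate G (\<psi> ` SL)"
proof -
  interpret gh: group_hom "G\<lparr>carrier := L\<rparr>" G \<psi> by (rule hom_sub_group_hom[OF assms(1-3)])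
  have "generate G (\<psi> ` SL) = \<psi> ` generate (G\<lparr>carrier := L\<rparr>) SL"
    by (rule gh.generate_img) (use SL in simp)
  also have "generate (G\<lparr>carrier := L\<rparr>) SL = generate G SL"
    by (rule group.generate_consistent[OF grp SL L])
  finally show ?thesis by simp
qed

lemma comm_from_commutator:
  assumes grp: "group G" and a: "a \<in> carrier G" and b: "b \<in> carrier G" and c: "commutator G a b = \<one>\<^bsub>G\<^esub>"
  shows "a \<otimes>\<^bsub>G\<^esub> b = b \<otimes>\<^bsub>G\<^esub> a"
proof -
  interpret group G by (rule grp)
  have "(inv\<^bsub>G\<^esub> a \<otimes>\<^bsub>G\<^esub> inv\<^bsub>G\<^esub> b) \<otimes>\<^bsub>G\<^esub> (a \<otimes>\<^bsub>G\<^esub> b) = \<one>\<^bsub>G\<^esub>" using c a b by (simp add: commutator_def m_assoc)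
  then have "inv\<^bsub>G\<^esub> (a \<otimes>\<^bsub>G\<^esub> b) = inv\<^bsub>G\<^esub> a \<otimes>\<^bsub>G\<^esub> inv\<^bsub>G\<^esub> b" using a b by (intro inv_equality) auto
  then have "a \<otimes>\<^bsub>G\<^esub> b = inv\<^bsub>G\<^esub> (inv\<^bsub>G\<^esub> a \<otimes>\<^bsub>G\<^esub> inv\<^bsub>G\<^esub> b)" using a b by (metis inv_inv m_closed)
  also have "\<dots> = b \<otimes>\<^bsub>G\<^esub> a" using a b by (simp add: inv_mult_group)
  finally show ?thesis .
qed


lemma lists_sub: "A \<subseteq> A' \<Longrightarrow> xs \<in> lists A \<Longrightarrow> xs \<in> lists A'"
  by (auto simp: lists_eq_set)

lemma Tc_homotopy_map:
  "s \<noteq> [] \<Longrightarrow> coboundary (Tc ph (\<lambda>F s. F (map f s)) F) s + Tc ph (\<lambda>F s. F (map f s)) (coboundary F) s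
     = F (map ph s) - F (map f s)"
  by (rule Tc_homotopy[where ph'=f]) (simp_all add: coboundary_def map_delete_at)

lemma Tc_homotopy_AWX:
  "s \<noteq> [] \<Longrightarrow> coboundary (Tc ph (\<lambda>F s. AW (Xc mul ps F) s) F) s + Tc ph (\<lambda>F s. AW (Xc mul ps F) s) (coboundary F) s
     = F (map ph s) - AW (Xc mul ps F) s"
  by (rule Tc_homotopy[where ph'="\<lambda>x. mul x (ps x)"]) (simp_all add: AWX_lin AWX_D AWX_0)

lemma Vn_step:
  assumes grp: "group G" and pm: "pseudo_mitotic G" and n1: "1 \<le> n"
      and IH: "\<And>q. 1 \<le> q \<Longrightarrow> q < n \<Longrightarrow> Vn G q"
  shows "Vn G n"
proof -
  interpret group G by (rule grp)
  define C where "C q = (if 1 \<le> q \<and> q < n then (SOME C. 0 \<le> C \<and> (\<forall>S. finite S \<and> S \<subseteq> carrier G \<longrightarrow>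
     (\<exists>S'. finite S' \<and> S \<subseteq> S' \<and> S' \<subseteq> carrier G \<and> goodpair G q C (generate G S) (generate G S')))) else 0)" for q
  have C_spec: "0 \<le> C q \<and> (\<forall>S. finite S \<and> S \<subseteq> carrier G \<longrightarrow>
     (\<exists>S'. finite S' \<and> S \<subseteq> S' \<and> S' \<subseteq> carrier G \<and> goodpair G q (C q) (generate G S) (generate G S')))"
    if q: "1 \<le> q" "q < n" for q
  proof -
    have "\<exists>C. 0 \<le> C \<and> (\<forall>S. finite S \<and> S \<subseteq> carrier G \<longrightarrow>
     (\<exists>S'. finite S' \<and> S \<subseteq> S' \<and> S' \<subseteq> carrier G \<and> goodpair G q C (generate G S) (generate G S')))"
      using IH[OF q] unfolding Vn_def .
    moreover have "C q = (SOME C. 0 \<le> C \<and> (\<forall>S. finite S \<and> S \<subseteq> carrier G \<longrightarrow>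
     (\<exists>S'. finite S' \<and> S \<subseteq> S' \<and> S' \<subseteq> carrier G \<and> goodpair G q C (generate G S) (generate G S'))))"
      using q by (simp add: C_def)
    ultimately show ?thesis by (simp only:) (rule someI_ex)
  qed
  have Cnn: "0 \<le> C q" for q
    using C_spec[of q] by (cases "1 \<le> q \<and> q < n") (auto simp: C_def)
  define P1 where "P1 k = real k * fact (Suc k)" for k :: nat
  define P2 where "P2 k = (1::real)" for k :: nat
  define KK where "KK = tbf P2 n + tbf P1 n + (ebf n C (n - 1) + wbf n C (n - 1)) * fact (n + 2)"
  have KK0: "0 \<le> KK"
    unfolding KK_def using tbf_nonneg[of P1 n] tbf_nonneg[of P2 n] ebf_nonneg[of C, OF Cnn] wbf_nonneg[of C, OF Cnn]
    by (simp add: P1_def P2_def)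
  show ?thesis
    unfolding Vn_def
  proof (rule exI[of _ KK], intro conjI allI impI)
    show "0 \<le> KK" by (rule KK0)
    fix S assume S: "finite S \<and> S \<subseteq> carrier G"
    define nxt where "nxt q T = (if Suc q < n then (SOME T'. finite T' \<and> T \<subseteq> T' \<and> T' \<subseteq> carrier G \<and>
        goodpair G (Suc q) (C (Suc q)) (generate G T) (generate G T')) else T)" for q T
    have nxt_spec: "finite (nxt q T) \<and> T \<subseteq> nxt q T \<and> nxt q T \<subseteq> carrier G \<and>
        (Suc q < n \<longrightarrow> goodpair G (Suc q) (C (Suc q)) (generate G T) (generate G (nxt q T)))"
      if T: "finite T" "T \<subseteq> carrier G" for q T
    proof (cases "Suc q < n")
      case True
      have "\<exists>T'. finite T' \<and> T \<subseteq> T' \<and> T' \<subseteq> carrier G \<and> goodpair G (Suc q) (C (Suc q)) (generate G T) (generate G T')"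
        using C_spec[of "Suc q"] True T by auto
      then have "finite (nxt q T) \<and> T \<subseteq> nxt q T \<and> nxt q T \<subseteq> carrier G \<and> goodpair G (Suc q) (C (Suc q)) (generate G T) (generate G (nxt q T))"
      proof -
        have "nxt q T = (SOME T'. finite T' \<and> T \<subseteq> T' \<and> T' \<subseteq> carrier G \<and>
          goodpair G (Suc q) (C (Suc q)) (generate G T) (generate G T'))" using True by (simp add: nxt_def)
        then show ?thesis using someI_ex[OF \<open>\<exists>T'. _\<close>] by simp
      qed
      then show ?thesis by blast
    next
      case False then show ?thesis using T by (simp add: nxt_def)
    qed
    define Sq where "Sq = rec_nat S nxt"
    have Sq0: "Sq 0 = S" and SqS: "\<And>q. Sq (Suc q) = nxt q (Sq q)" by (simp_all add: Sq_def)
    have Sq_fin: "finite (Sq q) \<and> Sq q \<subseteq> carrier G" for q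
      by (induction q) (use S nxt_spec in \<open>auto simp: Sq0 SqS\<close>)
    have Sq_mono: "Sq q \<subseteq> Sq (Suc q)" for q using nxt_spec[of "Sq q" q] Sq_fin[of q] by (simp add: SqS)
    have Sq_good: "goodpair G (Suc q) (C (Suc q)) (generate G (Sq q)) (generate G (Sq (Suc q)))" if "Suc q < n" for q
      using nxt_spec[of "Sq q" q] Sq_fin[of q] that by (simp add: SqS)
    define M where "M q = generate G (Sq q)" for q
    have Msub: "subgroup (M q) G" for q unfolding M_def using Sq_fin[of q] by (intro generate_is_subgroup) auto
    have Mmono: "M q \<subseteq> M (Suc q)" for q unfolding M_def by (rule mono_generate[OF Sq_mono])
    have SqS_mono: "i \<le> j \<Longrightarrow> Sq i \<subseteq> Sq j" for i j by (rule lift_Suc_mono_le[of Sq]) (use Sq_mono in auto)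
    define SL where "SL = Sq (n - 1)"
    define L where "L = M (n - 1)"
    have SL: "finite SL" "SL \<subseteq> carrier G" using Sq_fin by (auto simp: SL_def)
    have L_gen: "L = generate G SL" by (simp add: L_def M_def SL_def)
    have Lsub: "subgroup L G" unfolding L_def by (rule Msub)
    have SLL: "SL \<subseteq> L" unfolding L_gen by (auto intro: generate.incl)
    have "has_pseudo_mitosis G L" using pm SL unfolding pseudo_mitotic_def L_gen by blast
    then obtain \<psi>0 \<psi>1 g where h0: "\<psi>0 \<in> hom (G\<lparr>carrier := L\<rparr>) G" and h1: "\<psi>1 \<in> hom (G\<lparr>carrier := L\<rparr>) G"
      and gG: "g \<in> carrier G" and ph_eq: "\<And>h. h \<in> L \<Longrightarrow> h \<otimes>\<^bsub>G\<^esub> \<psi>1 h = \<psi>0 h"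
      and commu: "\<And>h h'. h \<in> L \<Longrightarrow> h' \<in> L \<Longrightarrow> commutator G h (\<psi>1 h') = \<one>\<^bsub>G\<^esub>"
      and conj: "\<And>h. h \<in> L \<Longrightarrow> \<psi>1 h = inv\<^bsub>G\<^esub> g \<otimes>\<^bsub>G\<^esub> \<psi>0 h \<otimes>\<^bsub>G\<^esub> g"
      unfolding has_pseudo_mitosis_def by blast
    have Lcar: "L \<subseteq> carrier G" using Lsub subgroup.subset by blast
    have oneL: "\<one>\<^bsub>G\<^esub> \<in> L" using Lsub subgroup.one_closed by blast
    have hc0: "\<And>x. x \<in> L \<Longrightarrow> \<psi>0 x \<in> carrier G" using hom_in_carrier[OF h0] by simp
    have hc1: "\<And>x. x \<in> L \<Longrightarrow> \<psi>1 x \<in> carrier G" using hom_in_carrier[OF h1] by simp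
    have hm0: "\<And>x y. x \<in> L \<Longrightarrow> y \<in> L \<Longrightarrow> \<psi>0 (x \<otimes>\<^bsub>G\<^esub> y) = \<psi>0 x \<otimes>\<^bsub>G\<^esub> \<psi>0 y" using hom_mult[OF h0] by simp
    have hm1: "\<And>x y. x \<in> L \<Longrightarrow> y \<in> L \<Longrightarrow> \<psi>1 (x \<otimes>\<^bsub>G\<^esub> y) = \<psi>1 x \<otimes>\<^bsub>G\<^esub> \<psi>1 y" using hom_mult[OF h1] by simp
    have psi1_one: "\<psi>1 \<one>\<^bsub>G\<^esub> = \<one>\<^bsub>G\<^esub>"
      using group_hom.hom_one[OF hom_sub_group_hom[OF grp Lsub h1]] by simp
    have Lclosed: "\<And>x y. x \<in> L \<Longrightarrow> y \<in> L \<Longrightarrow> x \<otimes>\<^bsub>G\<^esub> y \<in> L" by (rule subgroup.m_closed[OF Lsub])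
    have commL: "\<And>x y. x \<in> L \<Longrightarrow> y \<in> L \<Longrightarrow> x \<otimes>\<^bsub>G\<^esub> \<psi>1 y = \<psi>1 y \<otimes>\<^bsub>G\<^esub> x"
    proof -
      fix x y assume xy: "x \<in> L" "y \<in> L"
      show "x \<otimes>\<^bsub>G\<^esub> \<psi>1 y = \<psi>1 y \<otimes>\<^bsub>G\<^esub> x"
        by (rule comm_from_commutator[OF grp _ _ commu[OF xy]]) (use xy Lcar hc1 in auto)
    qed
    have gconj: "\<And>x. x \<in> L \<Longrightarrow> \<psi>0 x \<otimes>\<^bsub>G\<^esub> g = g \<otimes>\<^bsub>G\<^esub> \<psi>1 x"
    proof -
      fix x assume x: "x \<in> L"
      have e1: "\<psi>1 x = inv\<^bsub>G\<^esub> g \<otimes>\<^bsub>G\<^esub> (\<psi>0 x \<otimes>\<^bsub>G\<^esub> g)" using conj[OF x] gG hc0[OF x] by (simp add: m_assoc)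
      have c: "\<psi>0 x \<otimes>\<^bsub>G\<^esub> g \<in> carrier G" using gG hc0[OF x] by simp
      show "\<psi>0 x \<otimes>\<^bsub>G\<^esub> g = g \<otimes>\<^bsub>G\<^esub> \<psi>1 x" using inv_solve_left[OF hc1[OF x] gG c] e1 by simp
    qed
    define S' where "S' = SL \<union> \<psi>0 ` SL \<union> \<psi>1 ` SL \<union> {g}"
    have S'fin: "finite S'" using SL by (simp add: S'_def)
    have S'car: "S' \<subseteq> carrier G" using SL SLL hc0 hc1 gG by (auto simp: S'_def)
    define K' where "K' = generate G S'"
    have K'sub: "subgroup K' G" unfolding K'_def by (rule generate_is_subgroup[OF S'car])
    have K'car: "K' \<subseteq> carrier G" using K'sub subgroup.subset by blast
    have K'closed: "\<And>x y. x \<in> K' \<Longrightarrow> y \<in> K' \<Longrightarrow> x \<otimes>\<^bsub>G\<^esub> y \<in> K'" by (rule subgroup.m_closed[OF K'sub])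
    have LK': "L \<subseteq> K'" unfolding L_gen K'_def by (rule mono_generate) (auto simp: S'_def)
    have psi0K: "\<psi>0 x \<in> K'" if "x \<in> L" for x
    proof -
      have "\<psi>0 x \<in> generate G (\<psi>0 ` SL)" using hom_generate_sub[OF grp Lsub h0 SLL] that L_gen by auto
      also have "generate G (\<psi>0 ` SL) \<subseteq> K'" unfolding K'_def by (rule mono_generate) (auto simp: S'_def)
      finally show ?thesis .
    qed
    have psi1K: "\<psi>1 x \<in> K'" if "x \<in> L" for x
    proof -
      have "\<psi>1 x \<in> generate G (\<psi>1 ` SL)" using hom_generate_sub[OF grp Lsub h1 SLL] that L_gen by auto
      also have "generate G (\<psi>1 ` SL) \<subseteq> K'" unfolding K'_def by (rule mono_generate) (auto simp: S'_def)
      finally show ?thesis .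
    qed
    have gK: "g \<in> K'" unfolding K'_def by (rule generate.incl) (simp add: S'_def)
    have SS': "S \<subseteq> S'"
    proof -
      have "S \<subseteq> SL" unfolding SL_def using SqS_mono[of 0 "n - 1"] by (simp add: Sq0)
      then show ?thesis by (auto simp: S'_def)
    qed
    have H_eq: "generate G S = M 0" by (simp add: M_def Sq0)
    have M0L: "M 0 \<subseteq> L" unfolding L_def M_def by (rule mono_generate) (rule SqS_mono, simp)
    show "\<exists>S'. finite S' \<and> S \<subseteq> S' \<and> S' \<subseteq> carrier G \<and> goodpair G n KK (generate G S) (generate G S')"
    proof (rule exI[of _ S'], intro conjI)
      show "finite S'" by (rule S'fin)
      show "S \<subseteq> S'" by (rule SS')
      show "S' \<subseteq> carrier G" by (rule S'car)
      show "goodpair G n KK (generate G S) (generate G S')"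
        unfolding goodpair_def K'_def[symmetric] H_eq
      proof (intro allI impI)
        fix \<phi> :: "'a list \<Rightarrow> real" and c :: real
        assume c0: "0 \<le> c"
          and \<phi>b: "\<forall>xs\<in>lists K'. length xs = Suc n \<longrightarrow> \<bar>\<phi> xs\<bar> \<le> c"
          and \<phi>inv: "\<forall>k\<in>K'. \<forall>xs\<in>lists K'. length xs = Suc n \<longrightarrow> \<phi> (map ((\<otimes>\<^bsub>G\<^esub>) k) xs) = \<phi> xs"
          and \<phi>coc: "\<forall>xs\<in>lists K'. length xs = Suc (Suc n) \<longrightarrow> coboundary \<phi> xs = 0"
        define f where "f xs = (if length xs = Suc n then \<phi> xs else 0)" for xs
        have fb: "\<bar>f xs\<bar> \<le> c" if "xs \<in> lists K'" "length xs = Suc n" for xs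
          using \<phi>b that by (simp add: f_def)
        have finv: "f (map ((\<otimes>\<^bsub>G\<^esub>) k) xs) = f xs" if "k \<in> K'" "xs \<in> lists K'" for k xs
          using \<phi>inv that by (simp add: f_def)
        have fcoc: "coboundary f xs = 0" if "xs \<in> lists K'" "length xs = Suc (Suc n)" for xs
        proof -
          have "coboundary f xs = coboundary \<phi> xs"
            by (rule coboundary_cong) (use that in \<open>simp add: f_def length_delete_at'\<close>)
          then show ?thesis using \<phi>coc that by simp
        qed
        have inK: "\<And>x y. x \<in> L \<Longrightarrow> y \<in> L \<Longrightarrow> x \<otimes>\<^bsub>G\<^esub> \<psi>1 y \<in> K'"
        proof -
          fix x y assume "x \<in> L" "y \<in> L"
          then show "x \<otimes>\<^bsub>G\<^esub> \<psi>1 y \<in> K'" using LK' psi1K by (intro K'closed) auto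
        qed
        have phe: "\<And>x. x \<in> L \<Longrightarrow> \<psi>0 x = x \<otimes>\<^bsub>G\<^esub> \<psi>1 x" using ph_eq by simp
        interpret ms: msetting G \<psi>1 L K' \<psi>0 g
          by (intro msetting.intro xsetting.intro msetting_axioms.intro)
             (fact grp Lcar hc1 hm1 commL inK K'car Lclosed K'closed hm0 phe gK)+
        have xsL: "xs \<in> lists L" if "xs \<in> lists (M 0)" for xs using lists_sub[OF M0L that] .
        have xsK: "xs \<in> lists K'" if "xs \<in> lists L" for xs using lists_sub[OF LK' that] .
        define B where "B = Xc (monoid.mult G) \<psi>1 f"
        have goodM: "\<And>q. 1 \<le> q \<Longrightarrow> q \<le> n - 1 \<Longrightarrow> goodpair G q (C q) (M (q - 1)) (M q)"
        proof -
          fix q assume q: "1 \<le> q" "q \<le> n - 1"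
          then obtain q' where q': "q = Suc q'" by (cases q) auto
          have "Suc q' < n" using q q' n1 by simp
          then show "goodpair G q (C q) (M (q - 1)) (M q)" using Sq_good[of q'] q' by (simp add: M_def)
        qed
        have MnL: "M (n - 1) \<subseteq> L" by (simp add: L_def)
        have c0': "0 \<le> fact (n + 2) * c" using c0 by simp
        have B0: "\<And>t. B [] t = 0" and B0': "\<And>a. B a [] = 0" by (simp_all add: B_def)
        have Bcoc: "\<And>a t. a \<in> lists L \<Longrightarrow> t \<in> lists L \<Longrightarrow> a \<noteq> [] \<Longrightarrow> t \<noteq> [] \<Longrightarrow> length a + length t = n + 3 \<Longrightarrow> DD B a t = 0"
        proof -
          fix a t assume a: "a \<in> lists L" and t: "t \<in> lists L" and ne: "a \<noteq> []" "t \<noteq> []" and l: "length a + length t = n + 3"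
          have "DD B a t = Xc (monoid.mult G) \<psi>1 (coboundary f) a t"
            unfolding B_def by (rule Xc_chain[symmetric]) (use ne l in auto)
          also have "\<dots> = 0"
            by (rule ms.X_zero[OF _ a t]) (use l in \<open>auto intro!: fcoc\<close>)
          finally show "DD B a t = 0" .
        qed
        have Binv1: "\<And>x a t. x \<in> L \<Longrightarrow> a \<in> lists L \<Longrightarrow> t \<in> lists L \<Longrightarrow> B (map ((\<otimes>\<^bsub>G\<^esub>) x) a) t = B a t"
        proof -
          fix x a t assume x: "x \<in> L" and a: "a \<in> lists L" and t: "t \<in> lists L"
          have t1: "map ((\<otimes>\<^bsub>G\<^esub>) \<one>\<^bsub>G\<^esub>) t = t" using t Lcar by (intro map_idI) (auto simp: lists_eq_set)
          have "B (map ((\<otimes>\<^bsub>G\<^esub>) x) a) t = B (map ((\<otimes>\<^bsub>G\<^esub>) x) a) (map ((\<otimes>\<^bsub>G\<^esub>) \<one>\<^bsub>G\<^esub>) t)" by (simp only: t1)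
          also have "\<dots> = Xc (monoid.mult G) \<psi>1 (\<lambda>xs. f (map ((\<otimes>\<^bsub>G\<^esub>) (x \<otimes>\<^bsub>G\<^esub> \<psi>1 \<one>\<^bsub>G\<^esub>)) xs)) a t"
            unfolding B_def by (rule ms.X_equiv[OF x oneL a t])
          also have "x \<otimes>\<^bsub>G\<^esub> \<psi>1 \<one>\<^bsub>G\<^esub> = x" using x Lcar psi1_one by auto
          also have "Xc (monoid.mult G) \<psi>1 (\<lambda>xs. f (map ((\<otimes>\<^bsub>G\<^esub>) x) xs)) a t = B a t"
            unfolding B_def by (rule ms.X_local[OF _ a t]) (use x LK' in \<open>auto intro!: finv\<close>)
          finally show "B (map ((\<otimes>\<^bsub>G\<^esub>) x) a) t = B a t" .
        qed
        have Binv2: "\<And>y a t. y \<in> L \<Longrightarrow> a \<in> lists L \<Longrightarrow> t \<in> lists L \<Longrightarrow> B a (map ((\<otimes>\<^bsub>G\<^esub>) y) t) = B a t"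
        proof -
          fix y a t assume y: "y \<in> L" and a: "a \<in> lists L" and t: "t \<in> lists L"
          have a1: "map ((\<otimes>\<^bsub>G\<^esub>) \<one>\<^bsub>G\<^esub>) a = a" using a Lcar by (intro map_idI) (auto simp: lists_eq_set)
          have "B a (map ((\<otimes>\<^bsub>G\<^esub>) y) t) = B (map ((\<otimes>\<^bsub>G\<^esub>) \<one>\<^bsub>G\<^esub>) a) (map ((\<otimes>\<^bsub>G\<^esub>) y) t)" by (simp only: a1)
          also have "\<dots> = Xc (monoid.mult G) \<psi>1 (\<lambda>xs. f (map ((\<otimes>\<^bsub>G\<^esub>) (\<one>\<^bsub>G\<^esub> \<otimes>\<^bsub>G\<^esub> \<psi>1 y)) xs)) a t"
            unfolding B_def by (rule ms.X_equiv[OF oneL y a t])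
          also have "\<one>\<^bsub>G\<^esub> \<otimes>\<^bsub>G\<^esub> \<psi>1 y = \<psi>1 y" using y hc1 by auto
          also have "Xc (monoid.mult G) \<psi>1 (\<lambda>xs. f (map ((\<otimes>\<^bsub>G\<^esub>) (\<psi>1 y)) xs)) a t = B a t"
            unfolding B_def by (rule ms.X_local[OF _ a t]) (use y psi1K in \<open>auto intro!: finv\<close>)
          finally show "B a (map ((\<otimes>\<^bsub>G\<^esub>) y) t) = B a t" .
        qed
        have Bbd: "\<And>a t. a \<in> lists L \<Longrightarrow> t \<in> lists L \<Longrightarrow> length a + length t = n + 2 \<Longrightarrow> \<bar>B a t\<bar> \<le> fact (n + 2) * c"
        proof -
          fix a t assume a: "a \<in> lists L" and t: "t \<in> lists L" and l: "length a + length t = n + 2"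
          have "\<bar>B a t\<bar> \<le> fact (length a + length t) * c"
            unfolding B_def by (rule ms.X_bound[OF _ c0 a t]) (use l in \<open>auto intro!: fb\<close>)
          then show "\<bar>B a t\<bar> \<le> fact (n + 2) * c" using l by simp
        qed
        interpret zs: zsetting G n M L C B "fact (n + 2) * c"
          by (intro zsetting.intro) (fact grp n1 Msub Mmono Lsub MnL goodM Cnn c0' B0 B0' Bcoc Binv1 Binv2 Bbd)+
        obtain e where e1: "\<And>\<tau>. \<tau> \<in> lists (M 0) \<Longrightarrow> length \<tau> = n \<Longrightarrow> \<bar>e \<tau>\<bar> \<le> (ebf n C (n - 1) + wbf n C (n - 1)) * (fact (n + 2) * c)"
          and e2: "\<And>h \<tau>. h \<in> M 0 \<Longrightarrow> \<tau> \<in> lists (M 0) \<Longrightarrow> length \<tau> = n \<Longrightarrow> e (map ((\<otimes>\<^bsub>G\<^esub>) h) \<tau>) = e \<tau>"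
          and e3: "\<And>\<sigma>. \<sigma> \<in> lists (M 0) \<Longrightarrow> length \<sigma> = Suc n \<Longrightarrow> AW B \<sigma> = B [hd \<sigma>] \<sigma> + B \<sigma> [last \<sigma>] + coboundary e \<sigma>"
          using zs.zfinal by blast
        define T1 where "T1 = Tc \<psi>0 (\<lambda>F s. AW (Xc (monoid.mult G) \<psi>1 F) s) f"
        define T2 where "T2 = Tc \<psi>0 (\<lambda>F s. F (map (\<lambda>x. \<psi>0 x \<otimes>\<^bsub>G\<^esub> g) s)) f"
        have H1: "coboundary T1 \<sigma> = f (map \<psi>0 \<sigma>) - AW B \<sigma>" if "\<sigma> \<in> lists L" "length \<sigma> = Suc n" for \<sigma>
        proof -
          have ne: "\<sigma> \<noteq> []" using that by auto
          have "Tc \<psi>0 (\<lambda>F s. AW (Xc (monoid.mult G) \<psi>1 F) s) (coboundary f) \<sigma> = 0"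
            by (rule ms.T1.T_zero[OF _ that(1)]) (use that in \<open>auto intro!: fcoc\<close>)
          then show ?thesis using Tc_homotopy_AWX[OF ne, of \<psi>0 "monoid.mult G" \<psi>1 f]
            by (simp add: T1_def B_def)
        qed
        have H2: "coboundary T2 \<sigma> = f (map \<psi>0 \<sigma>) - f (map (\<lambda>x. \<psi>0 x \<otimes>\<^bsub>G\<^esub> g) \<sigma>)" if "\<sigma> \<in> lists L" "length \<sigma> = Suc n" for \<sigma>
        proof -
          have ne: "\<sigma> \<noteq> []" using that by auto
          have "Tc \<psi>0 (\<lambda>F s. F (map (\<lambda>x. \<psi>0 x \<otimes>\<^bsub>G\<^esub> g) s)) (coboundary f) \<sigma> = 0"
            by (rule ms.T2.T_zero[OF _ that(1)]) (use that in \<open>auto intro!: fcoc\<close>)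
          then show ?thesis using Tc_homotopy_map[OF ne, of \<psi>0 "\<lambda>x. \<psi>0 x \<otimes>\<^bsub>G\<^esub> g" f]
            by (simp add: T2_def)
        qed
        define b where "b \<tau> = T2 \<tau> - T1 \<tau> - e \<tau>" for \<tau>
        show "\<exists>b. primspec G n KK (M 0) \<phi> c b"
          unfolding primspec_def
        proof (rule exI[of _ b], intro conjI ballI impI)
          fix xs assume xs: "xs \<in> lists (M 0)" "length xs = n"
          have xL: "xs \<in> lists L" by (rule xsL[OF xs(1)])
          have t2: "\<bar>T2 xs\<bar> \<le> tbf (\<lambda>k. 1) (length xs) * c"
            unfolding T2_def by (rule ms.T2.T_bound[OF _ c0 xL]) (use xs in \<open>auto intro!: fb\<close>)
          have t1: "\<bar>T1 xs\<bar> \<le> tbf (\<lambda>k. real k * fact (Suc k)) (length xs) * c"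
            unfolding T1_def by (rule ms.T1.T_bound[OF _ c0 xL]) (use xs in \<open>auto intro!: fb\<close>)
          have ee: "\<bar>e xs\<bar> \<le> (ebf n C (n - 1) + wbf n C (n - 1)) * (fact (n + 2) * c)" by (rule e1[OF xs])
          have "KK * c = tbf (\<lambda>k. 1) n * c + tbf (\<lambda>k. real k * fact (Suc k)) n * c + (ebf n C (n - 1) + wbf n C (n - 1)) * (fact (n + 2) * c)"
            unfolding KK_def P1_def P2_def by (simp add: algebra_simps)
          then show "\<bar>b xs\<bar> \<le> KK * c" using t1[unfolded xs(2)] t2[unfolded xs(2)] ee unfolding b_def by linarith
        next
          fix k xs assume k: "k \<in> M 0" and xs: "xs \<in> lists (M 0)" "length xs = n"
          have xL: "xs \<in> lists L" by (rule xsL[OF xs(1)])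
          have kL: "k \<in> L" using k M0L by auto
          have "T2 (map ((\<otimes>\<^bsub>G\<^esub>) k) xs) = T2 xs"
            unfolding T2_def by (rule ms.T2.T_invariant[OF _ kL xL]) (rule finv)
          moreover have "T1 (map ((\<otimes>\<^bsub>G\<^esub>) k) xs) = T1 xs"
            unfolding T1_def by (rule ms.T1.T_invariant[OF _ kL xL]) (rule finv)
          ultimately show "b (map ((\<otimes>\<^bsub>G\<^esub>) k) xs) = b xs" using e2[OF k xs] by (simp add: b_def)
        next
          fix xs assume xs: "xs \<in> lists (M 0)" "length xs = Suc n"
          have xL: "xs \<in> lists L" by (rule xsL[OF xs(1)])
          have xK: "xs \<in> lists K'" by (rule xsK[OF xL])
          have ne: "xs \<noteq> []" using xs by auto
          have hdL: "hd xs \<in> L" using xL ne by (auto simp: lists_eq_set)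
          have lastL: "last xs \<in> L" using xL ne by (auto simp: lists_eq_set)
          have p1K: "map \<psi>1 xs \<in> lists K'" using xL psi1K by (auto simp: lists_eq_set)
          have bh: "B [hd xs] xs = f (map \<psi>1 xs)"
          proof -
            have "B [hd xs] xs = f (map (\<lambda>y. hd xs \<otimes>\<^bsub>G\<^esub> \<psi>1 y) xs)" using ne by (simp add: B_def Xc_a1)
            also have "map (\<lambda>y. hd xs \<otimes>\<^bsub>G\<^esub> \<psi>1 y) xs = map ((\<otimes>\<^bsub>G\<^esub>) (hd xs)) (map \<psi>1 xs)" by simp
            also have "f \<dots> = f (map \<psi>1 xs)" using hdL LK' p1K by (intro finv) auto
            finally show ?thesis .
          qed
          have bl: "B xs [last xs] = f xs"
          proof -
            have "B xs [last xs] = f (map (\<lambda>x. x \<otimes>\<^bsub>G\<^esub> \<psi>1 (last xs)) xs)" using ne by (simp add: B_def Xc_b1)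
            also have "map (\<lambda>x. x \<otimes>\<^bsub>G\<^esub> \<psi>1 (last xs)) xs = map ((\<otimes>\<^bsub>G\<^esub>) (\<psi>1 (last xs))) xs"
              using xL lastL by (intro map_cong refl) (auto simp: lists_eq_set commL)
            also have "f \<dots> = f xs" using lastL psi1K xK by (intro finv) auto
            finally show ?thesis .
          qed
          have bg: "f (map (\<lambda>x. \<psi>0 x \<otimes>\<^bsub>G\<^esub> g) xs) = f (map \<psi>1 xs)"
          proof -
            have meq: "map (\<lambda>x. \<psi>0 x \<otimes>\<^bsub>G\<^esub> g) xs = map ((\<otimes>\<^bsub>G\<^esub>) g) (map \<psi>1 xs)"
              using xL by (auto simp: lists_eq_set gconj)
            show ?thesis unfolding meq by (rule finv[OF gK p1K])
          qed
          have "coboundary b xs = coboundary T2 xs - coboundary T1 xs - coboundary e xs"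
            unfolding b_def by (simp add: coboundary_diff)
          also have "\<dots> = f xs"
            using H1[OF xL xs(2)] H2[OF xL xs(2)] e3[OF xs] bh bl bg by simp
          finally show "\<phi> xs = coboundary b xs" using xs(2) by (simp add: f_def)
        qed

      qed
    qed
  qed
qed


lemma Vn_all:
  assumes "group G" "pseudo_mitotic G"
  shows "1 \<le> n \<Longrightarrow> Vn G n"
proof (induction n rule: less_induct)
  case (less n)
  show ?case by (rule Vn_step[OF assms less.prems]) (use less.IH in auto)
qed

lemma cluster_mem:
  fixes F :: "('a list \<Rightarrow> real) filter"
  assumes "closed P" "inf (nhds h) F \<noteq> bot" "eventually (\<lambda>x. x \<in> P) F"
  shows "h \<in> P"
proof (rule ccontr)
  assume "h \<notin> P"
  then have "eventually (\<lambda>x. x \<in> - P) (nhds h)"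
    using assms(1) by (intro eventually_nhds_in_open) auto
  then have "eventually (\<lambda>x. False) (inf (nhds h) F)"
    using assms(3) unfolding eventually_inf by blast
  then show False using assms(2) by (simp add: eventually_False)
qed

lemma compact_box: "compact {b :: 'a list \<Rightarrow> real. \<forall>xs. b xs \<in> {-M..M}}"
proof -
  have "compactin (product_topology (\<lambda>_. euclidean) UNIV) (PiE UNIV (\<lambda>_::'a list. {-M..M::real}))"
    by (simp add: compactin_PiE)
  then have "compact (PiE UNIV (\<lambda>_::'a list. {-M..M::real}))"
    by (simp add: euclidean_product_topology)
  moreover have "PiE UNIV (\<lambda>_::'a list. {-M..M::real}) = {b. \<forall>xs. b xs \<in> {-M..M}}"
    by (auto simp: PiE_UNIV_domain Pi_def)
  ultimately show ?thesis by simp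
qed

lemma continuous_coboundary: "continuous_on UNIV (\<lambda>b :: 'a list \<Rightarrow> real. coboundary b xs)"
  unfolding coboundary_def by (intro continuous_intros continuous_on_product_coordinates)

theorem theorem3p5:
  fixes G :: "('a, 'b) monoid_scheme"
  assumes "group G" and "pseudo_mitotic G"
  shows "boundedly_acyclic G"
  unfolding boundedly_acyclic_def bounded_cohomology_vanishes_def
proof (intro allI impI ballI)
  fix n :: nat and f assume n1: "1 \<le> n" and f: "f \<in> Cb G n"
    and coc: "\<forall>xs\<in>tuples G (Suc (Suc n)). coboundary f xs = 0"
  interpret group G by (rule assms(1))
  obtain C0 where fb0: "\<And>xs. xs \<in> tuples G (Suc n) \<Longrightarrow> \<bar>f xs\<bar> \<le> C0"
    using f by (auto simp: Cb_def bounded_cochain_def)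
  define c where "c = max C0 0"
  have c0: "0 \<le> c" by (simp add: c_def)
  have fb: "\<And>xs. xs \<in> tuples G (Suc n) \<Longrightarrow> \<bar>f xs\<bar> \<le> c"
  proof -
    fix xs assume "xs \<in> tuples G (Suc n)"
    then have "\<bar>f xs\<bar> \<le> C0" by (rule fb0)
    then show "\<bar>f xs\<bar> \<le> c" unfolding c_def by linarith
  qed
  have finv: "\<And>g xs. g \<in> carrier G \<Longrightarrow> xs \<in> tuples G (Suc n) \<Longrightarrow> f (map ((\<otimes>\<^bsub>G\<^esub>) g) xs) = f xs"
    using f by (auto simp: Cb_def invariant_cochain_def)
  have "Vn G n" by (rule Vn_all[OF assms n1])
  then obtain K where K0: "0 \<le> K" and VS0: "\<forall>S. finite S \<and> S \<subseteq> carrier G \<longrightarrow>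
      (\<exists>S'. finite S' \<and> S \<subseteq> S' \<and> S' \<subseteq> carrier G \<and> goodpair G n K (generate G S) (generate G S'))"
    unfolding Vn_def by (elim exE conjE)
  have pex: "\<exists>b. primspec G n K (generate G S) f c b" if S: "finite S" "S \<subseteq> carrier G" for S
  proof -
    have "\<exists>S'. finite S' \<and> S \<subseteq> S' \<and> S' \<subseteq> carrier G \<and> goodpair G n K (generate G S) (generate G S')"
      using VS0 S by simp
    then obtain S' where S': "finite S'" "S \<subseteq> S'" "S' \<subseteq> carrier G" and gp: "goodpair G n K (generate G S) (generate G S')"
      by (elim exE conjE)
    have Kc: "generate G S' \<subseteq> carrier G" by (rule generate_incl[OF S'(3)])
    have lc: "xs \<in> lists (generate G S') \<Longrightarrow> xs \<in> lists (carrier G)" for xs using Kc by (auto simp: lists_eq_set)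
    have h1: "\<forall>xs\<in>lists (generate G S'). length xs = Suc n \<longrightarrow> \<bar>f xs\<bar> \<le> c"
    proof (intro ballI impI)
      fix xs assume "xs \<in> lists (generate G S')" "length xs = Suc n"
      then show "\<bar>f xs\<bar> \<le> c" using Kc by (intro fb) (auto simp: tuples_def lists_eq_set)
    qed
    have h2: "\<forall>k\<in>generate G S'. \<forall>xs\<in>lists (generate G S'). length xs = Suc n \<longrightarrow> f (map ((\<otimes>\<^bsub>G\<^esub>) k) xs) = f xs"
    proof (intro ballI impI)
      fix k xs assume "k \<in> generate G S'" "xs \<in> lists (generate G S')" "length xs = Suc n"
      then show "f (map ((\<otimes>\<^bsub>G\<^esub>) k) xs) = f xs" using Kc by (intro finv) (auto simp: tuples_def lists_eq_set)
    qed
    have h3: "\<forall>xs\<in>lists (generate G S'). length xs = Suc (Suc n) \<longrightarrow> coboundary f xs = 0"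
    proof (intro ballI impI)
      fix xs assume "xs \<in> lists (generate G S')" "length xs = Suc (Suc n)"
      then show "coboundary f xs = 0" using Kc coc by (auto simp: tuples_def lists_eq_set)
    qed
    show ?thesis using gp[unfolded goodpair_def, rule_format, OF c0 h1[rule_format] h2[rule_format] h3[rule_format]] .
  qed
  define bS where "bS S = (SOME b. primspec G n K (generate G S) f c b)" for S
  have bS_spec: "primspec G n K (generate G S) f c (bS S)" if "finite S" "S \<subseteq> carrier G" for S
    unfolding bS_def by (rule someI_ex[OF pex[OF that]])
  define bt where "bt S xs = (if finite S \<and> S \<subseteq> carrier G \<and> xs \<in> lists (generate G S) \<and> length xs = n then bS S xs else 0)" for S xs
  define F where "F = filtermap bt (finite_subsets_at_top (carrier G))"
  define U where "U = {b :: 'a list \<Rightarrow> real. \<forall>xs. b xs \<in> {-(K * c)..K * c}}"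
  have Ucomp: "compact U" unfolding U_def by (rule compact_box)
  have Kc0: "0 \<le> K * c" using K0 c0 by simp
  have bt_bd: "\<bar>bt S xs\<bar> \<le> K * c" for S xs
    using bS_spec[of S] Kc0 by (auto simp: bt_def primspec_def)
  have FU: "eventually (\<lambda>b. b \<in> U) F"
  proof -
    have btU: "bt S xs \<in> {-(K * c)..K * c}" for S xs using bt_bd[of S xs] by (auto simp: abs_le_iff)
    show ?thesis unfolding F_def eventually_filtermap U_def by (rule always_eventually) (intro allI CollectI btU)
  qed
  have Fne: "F \<noteq> bot" by (simp add: F_def filtermap_bot_iff)
  obtain h where hU: "h \<in> U" and hcl: "inf (nhds h) F \<noteq> bot"
    using Ucomp[unfolded compact_filter] Fne FU by blast
  have gen_incl: "set xs \<subseteq> Y \<Longrightarrow> xs \<in> lists (generate G Y)" for xs Y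
    by (auto simp: lists_eq_set intro: generate.incl)
  have sgY: "Y \<subseteq> carrier G \<Longrightarrow> subgroup (generate G Y) G" for Y by (rule generate_is_subgroup)
  have C1: "f xs = coboundary h xs" if xs: "xs \<in> tuples G (Suc n)" for xs
  proof -
    have "h \<in> {b. coboundary b xs = f xs}"
    proof (rule cluster_mem[OF _ hcl])
      show "closed {b :: 'a list \<Rightarrow> real. coboundary b xs = f xs}"
        by (rule closed_Collect_eq) (simp_all add: continuous_coboundary)
      show "eventually (\<lambda>b. b \<in> {b. coboundary b xs = f xs}) F"
        unfolding F_def eventually_filtermap eventually_finite_subsets_at_top
      proof (intro exI[of _ "set xs"] conjI allI impI)
        show "finite (set xs)" by simp
        show "set xs \<subseteq> carrier G" using xs by (simp add: tuples_def)
        fix Y assume Y: "finite Y \<and> set xs \<subseteq> Y \<and> Y \<subseteq> carrier G"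
        have xY: "xs \<in> lists (generate G Y)" using Y gen_incl by blast
        have "coboundary (bt Y) xs = coboundary (bS Y) xs"
          by (rule coboundary_cong) (use xs Y xY in \<open>auto simp: bt_def tuples_def lists_delete_at length_delete_at'\<close>)
        also have "\<dots> = f xs" using bS_spec[of Y] Y xY xs by (auto simp: primspec_def tuples_def)
        finally show "bt Y \<in> {b. coboundary b xs = f xs}" by simp
      qed
    qed
    then show ?thesis by simp
  qed
  have C2: "h (map ((\<otimes>\<^bsub>G\<^esub>) g) xs) = h xs" if g: "g \<in> carrier G" and xs: "xs \<in> tuples G n" for g xs
  proof -
    have "h \<in> {b. b (map ((\<otimes>\<^bsub>G\<^esub>) g) xs) = b xs}"
    proof (rule cluster_mem[OF _ hcl])
      show "closed {b :: 'a list \<Rightarrow> real. b (map ((\<otimes>\<^bsub>G\<^esub>) g) xs) = b xs}"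
        by (rule closed_Collect_eq) simp_all
      show "eventually (\<lambda>b. b \<in> {b. b (map ((\<otimes>\<^bsub>G\<^esub>) g) xs) = b xs}) F"
        unfolding F_def eventually_filtermap eventually_finite_subsets_at_top
      proof (intro exI[of _ "insert g (set xs)"] conjI allI impI)
        show "finite (insert g (set xs))" by simp
        show "insert g (set xs) \<subseteq> carrier G" using xs g by (simp add: tuples_def)
        fix Y assume Y: "finite Y \<and> insert g (set xs) \<subseteq> Y \<and> Y \<subseteq> carrier G"
        have xY: "xs \<in> lists (generate G Y)" using Y gen_incl by blast
        have gY: "g \<in> generate G Y" using Y by (auto intro: generate.incl)
        have mY: "map ((\<otimes>\<^bsub>G\<^esub>) g) xs \<in> lists (generate G Y)"
          using xY gY sgY[of Y] Y by (auto simp: lists_eq_set subgroup.m_closed)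
        have "bt Y (map ((\<otimes>\<^bsub>G\<^esub>) g) xs) = bS Y (map ((\<otimes>\<^bsub>G\<^esub>) g) xs)" using Y mY xs by (simp add: bt_def tuples_def)
        also have "\<dots> = bS Y xs" using bS_spec[of Y] Y xY xs gY by (auto simp: primspec_def tuples_def)
        also have "\<dots> = bt Y xs" using Y xY xs by (simp add: bt_def tuples_def)
        finally show "bt Y \<in> {b. b (map ((\<otimes>\<^bsub>G\<^esub>) g) xs) = b xs}" by simp
      qed
    qed
    then show ?thesis by simp
  qed
  have nn: "Suc (n - 1) = n" using n1 by simp
  have "h \<in> Cb G (n - 1)"
    unfolding Cb_def bounded_cochain_def invariant_cochain_def nn
  proof (intro CollectI conjI exI[of _ "K * c"] ballI)
    fix xs
    have "\<forall>xs. h xs \<in> {-(K * c)..K * c}" using hU unfolding U_def mem_Collect_eq .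
    then have "h xs \<in> {-(K * c)..K * c}" by (rule spec)
    then show "\<bar>h xs\<bar> \<le> K * c" by (simp add: abs_le_iff)
  next
    fix g xs assume "g \<in> carrier G" "xs \<in> tuples G n"
    then show "h (map ((\<otimes>\<^bsub>G\<^esub>) g) xs) = h xs" by (rule C2)
  qed
  then show "\<exists>h\<in>Cb G (n - 1). \<forall>xs\<in>tuples G (Suc n). f xs = coboundary h xs"
    using C1 by blast
qed


end
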